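(* Let $I$ be a finite tree and $\Gamma\in\mathrm{Quiv}(I)$ any orientation. Then (a) the automorphism group $\mathrm{Aut}_{R_0(I)}(\Gamma)$ is cyclic, and (b) the automorphism group $\mathrm{Aut}_{R(I)}(\Gamma)$ is generated by two involutions.
   Context: Let $I$ be a finite tree (connected, acyclic finite graph). $\mathrm{Quiv}(I)$ is the set of orientations of $I$. For $\Gamma\in\mathrm{Quiv}(I)$ and a vertex $i$ that is a source or sink of $\Gamma$, $s_i\Gamma$ is the orientation obtained by reversing all arrows at $i$; $\Gamma^{\mathrm{op}}$ is obtained by reversing all arrows. The groupoid $R_0(I)$ has object set $\mathrm{Quiv}(I)$ and is generated by elementary isomorphisms $\Sigma_i:\Gamma\to s_i\Gamma$ (one for each $\Gamma$ and each source or sink $i$ of $\Gamma$), subject to the relations (whenever both sides are defined): (R1) $\Sigma_i^2=1$; (R2) $\Sigma_i\Sigma_j=\Sigma_j\Sigma_i$ whenever $i,j$ are not adjacent in $I$. The groupoid $R(I)$ has the same objects and is generated by the $\Sigma_i$ together with elementary isomorphisms $D:\Gamma\to\Gamma^{\mathrm{op}}$ for all $\Gamma$, subject to (R1), (R2) and (R3) $D^2=1$, (R4) $D\Sigma_i=\Sigma_iD$ for all $i$ (whenever defined). *)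

theory Defs
  imports "HOL-Algebra.Elementary_Groups"
begin

definition is_graph :: "'v set \<Rightarrow> ('v \<times> 'v) set \<Rightarrow> bool" where
  "is_graph V E \<longleftrightarrow> E \<subseteq> V \<times> V \<and> sym E \<and> irrefl E"

definition has_cycle :: "'v set \<Rightarrow> ('v \<times> 'v) set \<Rightarrow> bool" where
  "has_cycle V E \<longleftrightarrow> (\<exists>xs. length xs \<ge> 3 \<and> distinct xs \<and> set xs \<subseteq> V \<and>
      (\<forall>k. Suc k < length xs \<longrightarrow> (xs ! k, xs ! Suc k) \<in> E) \<and>
      (last xs, hd xs) \<in> E)"

definition is_finite_tree :: "'v set \<Rightarrow> ('v \<times> 'v) set \<Rightarrow> bool" where
  "is_finite_tree V E \<longleftrightarrow> finite V \<and> V \<noteq> {} \<and> is_graph V E \<and>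
      (\<forall>x\<in>V. \<forall>y\<in>V. (x, y) \<in> E\<^sup>*) \<and> \<not> has_cycle V E"

text \<open>An orientation is a set of arrows (a,b) meaning a \<rightarrow> b; every edge carries exactly one arrow.\<close>
definition Quiv :: "'v set \<Rightarrow> ('v \<times> 'v) set \<Rightarrow> ('v \<times> 'v) set set" where
  "Quiv V E = {Q. Q \<subseteq> E \<and> (\<forall>(a, b)\<in>E. (a, b) \<in> Q \<longleftrightarrow> (b, a) \<notin> Q)}"

definition is_source :: "('v \<times> 'v) set \<Rightarrow> 'v \<Rightarrow> bool" where
  "is_source Q i \<longleftrightarrow> (\<forall>j. (j, i) \<notin> Q)"

definition is_sink :: "('v \<times> 'v) set \<Rightarrow> 'v \<Rightarrow> bool" where
  "is_sink Q i \<longleftrightarrow> (\<forall>j. (i, j) \<notin> Q)"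

definition refl_at :: "'v \<Rightarrow> ('v \<times> 'v) set \<Rightarrow> ('v \<times> 'v) set" where
  "refl_at i Q = {(a, b) \<in> Q. a \<noteq> i \<and> b \<noteq> i} \<union> {(b, a) | a b. (a, b) \<in> Q \<and> (a = i \<or> b = i)}"

text \<open>Generators: Sig i (the elementary isomorphisms Sigma_i) and Dl (the isomorphisms D).\<close>
datatype 'v gen = Sig 'v | Dl

fun gen_step :: "'v set \<Rightarrow> ('v \<times> 'v) set \<Rightarrow> 'v gen \<Rightarrow> ('v \<times> 'v) set option" where
  "gen_step V Q (Sig i) =
     (if i \<in> V \<and> (is_source Q i \<or> is_sink Q i) then Some (refl_at i Q) else None)"
| "gen_step V Q Dl = Some (converse Q)"

text \<open>A word is a composable path of generators, read left to right (first letter applied first).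
  walk V Q w is the target object, or None if the path is not composable.\<close>
fun walk :: "'v set \<Rightarrow> ('v \<times> 'v) set \<Rightarrow> 'v gen list \<Rightarrow> ('v \<times> 'v) set option" where
  "walk V Q [] = Some Q"
| "walk V Q (g # w) = (case gen_step V Q g of None \<Rightarrow> None | Some Q' \<Rightarrow> walk V Q' w)"

text \<open>Defining relations, as pairs of (paths of) words; withD selects R(I) rather than R_0(I).
  (R1) Sigma_i Sigma_i = 1, (R2) Sigma_i Sigma_j = Sigma_j Sigma_i for non-adjacent i, j,
  (R3) D D = 1, (R4) D Sigma_i = Sigma_i D.\<close>
inductive basic_rel :: "bool \<Rightarrow> ('v \<times> 'v) set \<Rightarrow> 'v gen list \<Rightarrow> 'v gen list \<Rightarrow> bool"
  for withD :: bool and E :: "('v \<times> 'v) set" where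
  R1: "basic_rel withD E [Sig i, Sig i] []"
| R2: "(i, j) \<notin> E \<Longrightarrow> basic_rel withD E [Sig i, Sig j] [Sig j, Sig i]"
| R3: "withD \<Longrightarrow> basic_rel withD E [Dl, Dl] []"
| R4: "withD \<Longrightarrow> basic_rel withD E [Dl, Sig i] [Sig i, Dl]"

definition allowed :: "bool \<Rightarrow> 'v gen \<Rightarrow> bool" where
  "allowed withD g \<longleftrightarrow> withD \<or> g \<noteq> Dl"

definition rstep :: "bool \<Rightarrow> 'v set \<Rightarrow> ('v \<times> 'v) set \<Rightarrow> ('v \<times> 'v) set
                       \<Rightarrow> 'v gen list \<Rightarrow> 'v gen list \<Rightarrow> bool" where
  "rstep withD V E Q w w' \<longleftrightarrow>
     (\<exists>p u v s. w = p @ u @ s \<and> w' = p @ v @ s \<and> basic_rel withD E u v) \<and>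
     walk V Q w \<noteq> None \<and> walk V Q w' \<noteq> None \<and>
     (\<forall>g\<in>set w. allowed withD g) \<and> (\<forall>g\<in>set w'. allowed withD g)"

text \<open>Morphisms equal in the presented groupoid: the congruence generated by the relations.\<close>
definition word_eq :: "bool \<Rightarrow> 'v set \<Rightarrow> ('v \<times> 'v) set \<Rightarrow> ('v \<times> 'v) set
                       \<Rightarrow> 'v gen list \<Rightarrow> 'v gen list \<Rightarrow> bool" where
  "word_eq withD V E Q = equivclp (rstep withD V E Q)"

definition loops :: "bool \<Rightarrow> 'v set \<Rightarrow> ('v \<times> 'v) set \<Rightarrow> 'v gen list set" where
  "loops withD V Q = {w. walk V Q w = Some Q \<and> (\<forall>g\<in>set w. allowed withD g)}"

definition loop_class :: "bool \<Rightarrow> 'v set \<Rightarrow> ('v \<times> 'v) set \<Rightarrow> ('v \<times> 'v) set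
                          \<Rightarrow> 'v gen list \<Rightarrow> 'v gen list set" where
  "loop_class withD V E Q w = {w' \<in> loops withD V Q. word_eq withD V E Q w w'}"

definition Aut_grp :: "bool \<Rightarrow> 'v set \<Rightarrow> ('v \<times> 'v) set \<Rightarrow> ('v \<times> 'v) set
                       \<Rightarrow> 'v gen list set monoid" where
  "Aut_grp withD V E Q =
     \<lparr> carrier = loop_class withD V E Q ` loops withD V Q,
       monoid.mult = (\<lambda>A B. \<Union>a\<in>A. \<Union>b\<in>B. loop_class withD V E Q (a @ b)),
       one = loop_class withD V E Q [] \<rparr>"

abbreviation Aut_R0 :: "'v set \<Rightarrow> ('v \<times> 'v) set \<Rightarrow> ('v \<times> 'v) set \<Rightarrow> 'v gen list set monoid" where
  "Aut_R0 \<equiv> Aut_grp False"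

abbreviation Aut_R :: "'v set \<Rightarrow> ('v \<times> 'v) set \<Rightarrow> ('v \<times> 'v) set \<Rightarrow> 'v gen list set monoid" where
  "Aut_R \<equiv> Aut_grp True"

definition is_involution :: "('a, 'b) monoid_scheme \<Rightarrow> 'a \<Rightarrow> bool" where
  "is_involution G x \<longleftrightarrow> x \<in> carrier G \<and> x \<otimes>\<^bsub>G\<^esub> x = \<one>\<^bsub>G\<^esub> \<and> x \<noteq> \<one>\<^bsub>G\<^esub>"

end

theory Submission
  imports Defs "HOL-Library.Multiset"
begin

lemma equivclp_inv:
  assumes "\<And>x y. r x y \<Longrightarrow> P x \<longleftrightarrow> P y" "equivclp r x y" "P x"
  shows "P y"
  using assms(2)
proof (induction rule: equivclp_induct)
  case base
  show ?case using assms(3) .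
next
  case (step y z)
  then show ?case using assms(1)[of y z] assms(1)[of z y] by blast
qed

lemma equivclp_map:
  assumes "\<And>x y. r x y \<Longrightarrow> P x \<longleftrightarrow> P y" "\<And>x y. r x y \<Longrightarrow> P x \<Longrightarrow> r' (f x) (f y)"
    "equivclp r x y" "P x"
  shows "equivclp r' (f x) (f y)"
proof -
  have "P y \<and> equivclp r' (f x) (f y)"
    using assms(3)
  proof (induction rule: equivclp_induct)
    case base
    show ?case using assms(4) by simp
  next
    case (step y z)
    have Py: "P y" using step(3) by (rule conjunct1)
    have E: "equivclp r' (f x) (f y)" using step(3) by (rule conjunct2)
    from step(2) show ?case
    proof
      assume ryz: "r y z"
      have Pz: "P z" using assms(1)[OF ryz] Py by simp
      have "r' (f y) (f z)" using assms(2)[OF ryz Py] .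
      then have "equivclp r' (f x) (f z)" using equivclp_into_equivclp[OF E] by simp
      then show ?thesis using Pz by simp
    next
      assume rzy: "r z y"
      have Pz: "P z" using assms(1)[OF rzy] Py by simp
      have "r' (f z) (f y)" using assms(2)[OF rzy Pz] .
      then have "equivclp r' (f x) (f z)" using equivclp_into_equivclp[OF E] by simp
      then show ?thesis using Pz by simp
    qed
  qed
  then show ?thesis by simp
qed

lemma walk_append:
  "walk V Q (u @ v) = (case walk V Q u of None \<Rightarrow> None | Some Q' \<Rightarrow> walk V Q' v)"
  by (induction u arbitrary: Q) (auto split: option.splits)

lemma walk_Cons_Some:
  "walk V Q (g # w) = Some Q'' \<longleftrightarrow> (\<exists>Q'. gen_step V Q g = Some Q' \<and> walk V Q' w = Some Q'')"
  by (auto split: option.splits)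

lemma walk_append_Some:
  "walk V Q (u @ v) = Some Q'' \<longleftrightarrow> (\<exists>Q'. walk V Q u = Some Q' \<and> walk V Q' v = Some Q'')"
  by (auto simp: walk_append split: option.splits)

lemma refl_at_invol[simp]: "refl_at i (refl_at i Q) = Q"
  unfolding refl_at_def by auto

lemma sink_refl: "is_sink Q i \<Longrightarrow> is_source (refl_at i Q) i"
  unfolding refl_at_def is_sink_def is_source_def by auto

lemma source_refl: "is_source Q i \<Longrightarrow> is_sink (refl_at i Q) i"
  unfolding refl_at_def is_sink_def is_source_def by auto

lemma converse_refl_at: "converse (refl_at i Q) = refl_at i (converse Q)"
  unfolding refl_at_def by auto

lemma sink_converse[simp]: "is_sink (converse Q) i = is_source Q i"
  unfolding is_sink_def is_source_def by auto

lemma source_converse[simp]: "is_source (converse Q) i = is_sink Q i"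
  unfolding is_sink_def is_source_def by auto

lemma refl_at_comm:
  assumes "(i, j) \<notin> Q" "(j, i) \<notin> Q"
  shows "refl_at i (refl_at j Q) = refl_at j (refl_at i Q)"
  using assms unfolding refl_at_def by auto

lemma sink_refl_other:
  assumes "a \<noteq> i" "(a, i) \<notin> Q" "(i, a) \<notin> Q"
  shows "is_sink (refl_at a Q) i = is_sink Q i" "is_source (refl_at a Q) i = is_source Q i"
  using assms unfolding refl_at_def is_sink_def is_source_def by auto

lemma gen_step_rev: "gen_step V Q g = Some Q' \<Longrightarrow> gen_step V Q' g = Some Q"
  by (cases g) (auto simp: sink_refl source_refl split: if_splits)

lemma walk_rev: "walk V Q w = Some Q' \<Longrightarrow> walk V Q' (rev w) = Some Q"
proof (induction w arbitrary: Q)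
  case Nil
  then show ?case by simp
next
  case (Cons g w)
  then obtain Q1 where "gen_step V Q g = Some Q1" "walk V Q1 w = Some Q'"
    by (auto split: option.splits)
  then show ?case using Cons.IH[of Q1] gen_step_rev[of V Q g Q1] by (simp add: walk_append)
qed

lemma gen_step_converse:
  "gen_step V (converse Q) g = map_option converse (gen_step V Q g)"
  by (cases g) (auto simp: converse_refl_at)

lemma walk_converse:
  "walk V (converse Q) w = map_option converse (walk V Q w)"
  by (induction w arbitrary: Q) (auto simp: gen_step_converse split: option.splits)

lemma gen_step_subE:
  assumes "sym E" "Q \<subseteq> E" "gen_step V Q g = Some Q'" shows "Q' \<subseteq> E"
  using assms by (cases g) (auto simp: refl_at_def split: if_splits dest: symD)

lemma walk_subE:
  assumes "sym E" "Q \<subseteq> E" "walk V Q w = Some Q'" shows "Q' \<subseteq> E"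
  using assms
proof (induction w arbitrary: Q)
  case (Cons g w)
  then show ?case by (auto split: option.splits dest: gen_step_subE)
qed simp

lemma basic_rel_walk:
  assumes "basic_rel wd E u v" "sym E" "Q \<subseteq> E" "walk V Q u \<noteq> None" "walk V Q v \<noteq> None"
  shows "walk V Q u = walk V Q v"
  using assms(1)
proof cases
  case (R1 i)
  then show ?thesis using assms(4) by (auto split: if_splits)
next
  case (R2 i j)
  then have "(i, j) \<notin> Q" "(j, i) \<notin> Q" using assms(2,3) by (auto dest: symD)
  then show ?thesis using R2 assms(4,5) refl_at_comm[of i j Q]
    by (auto split: if_splits)
next
  case R3
  then show ?thesis by simp
next
  case (R4 i)
  then show ?thesis using assms(4,5) by (auto simp: converse_refl_at split: if_splits)
qed

lemma rstep_walk:
  assumes "rstep wd V E Q w w'" "sym E" "Q \<subseteq> E"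
  shows "walk V Q w = walk V Q w'"
proof -
  from assms(1) obtain p u v s where ws: "w = p @ u @ s" "w' = p @ v @ s" "basic_rel wd E u v"
    and nn: "walk V Q w \<noteq> None" "walk V Q w' \<noteq> None"
    unfolding rstep_def by blast
  from nn ws obtain Q1 where Q1: "walk V Q p = Some Q1"
    by (auto simp: walk_append split: option.splits)
  have "Q1 \<subseteq> E" using walk_subE[OF assms(2,3) Q1] .
  moreover have "walk V Q1 u \<noteq> None" "walk V Q1 v \<noteq> None"
    using nn ws Q1 by (auto simp: walk_append split: option.splits)
  ultimately have "walk V Q1 u = walk V Q1 v"
    using basic_rel_walk[OF ws(3) assms(2)] by blast
  then show ?thesis using ws Q1 by (simp add: walk_append)
qed

lemma rstep_allowed:
  "rstep wd V E Q w w' \<Longrightarrow> (\<forall>g\<in>set w. allowed wd g) \<and> (\<forall>g\<in>set w'. allowed wd g)"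
  unfolding rstep_def by blast

lemma weq_walk:
  assumes "word_eq wd V E Q w w'" "sym E" "Q \<subseteq> E"
  shows "walk V Q w = walk V Q w'"
proof -
  have "walk V Q w' = walk V Q w"
    using equivclp_inv[where P = "\<lambda>x. walk V Q x = walk V Q w" and r = "rstep wd V E Q"]
      assms rstep_walk unfolding word_eq_def by metis
  then show ?thesis by simp
qed

lemma weq_loops:
  assumes "word_eq wd V E Q w w'" "sym E" "Q \<subseteq> E" "w \<in> loops wd V Q"
  shows "w' \<in> loops wd V Q"
proof -
  have "\<And>x y. rstep wd V E Q x y \<Longrightarrow> x \<in> loops wd V Q \<longleftrightarrow> y \<in> loops wd V Q"
  proof -
    fix x y assume r: "rstep wd V E Q x y"
    have "walk V Q x = walk V Q y" using rstep_walk[OF r assms(2,3)] .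
    then show "x \<in> loops wd V Q \<longleftrightarrow> y \<in> loops wd V Q"
      using rstep_allowed[OF r] unfolding loops_def by simp
  qed
  then show ?thesis using equivclp_inv[of "rstep wd V E Q" "\<lambda>x. x \<in> loops wd V Q" w w'] assms(1,4)
    unfolding word_eq_def by blast
qed

lemma weq_prefix:
  assumes "walk V Q p = Some Q1" "\<forall>g\<in>set p. allowed wd g" "word_eq wd V E Q1 w w'"
  shows "word_eq wd V E Q (p @ w) (p @ w')"
proof -
  have "\<And>x y. rstep wd V E Q1 x y \<Longrightarrow> rstep wd V E Q (p @ x) (p @ y)"
  proof -
    fix x y assume "rstep wd V E Q1 x y"
    then obtain p' u v s where "x = p' @ u @ s" "y = p' @ v @ s" "basic_rel wd E u v"
      "walk V Q1 x \<noteq> None" "walk V Q1 y \<noteq> None" "\<forall>g\<in>set x. allowed wd g" "\<forall>g\<in>set y. allowed wd g"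
      unfolding rstep_def by blast
    then have e: "p @ x = (p @ p') @ u @ s" "p @ y = (p @ p') @ v @ s" "basic_rel wd E u v"
      "walk V Q (p @ x) \<noteq> None" "walk V Q (p @ y) \<noteq> None"
      "\<forall>g\<in>set (p @ x). allowed wd g" "\<forall>g\<in>set (p @ y). allowed wd g"
      using assms(1,2) by (auto simp: walk_append)
    show "rstep wd V E Q (p @ x) (p @ y)"
      unfolding rstep_def using e by blast
  qed
  then show ?thesis
    using equivclp_map[where P = "\<lambda>_. True" and r = "rstep wd V E Q1" and r' = "rstep wd V E Q"
        and f = "\<lambda>x. p @ x"] assms(3) unfolding word_eq_def by blast
qed

lemma weq_append:
  assumes "word_eq wd V E Q w w'" "sym E" "Q \<subseteq> E" "walk V Q w = Some Q1"
    "\<forall>g\<in>set s. allowed wd g" "walk V Q1 s \<noteq> None"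
  shows "word_eq wd V E Q (w @ s) (w' @ s)"
proof -
  have 1: "\<And>x y. rstep wd V E Q x y \<Longrightarrow> (walk V Q x = Some Q1) \<longleftrightarrow> (walk V Q y = Some Q1)"
    using rstep_walk[OF _ assms(2,3)] by metis
  have "\<And>x y. rstep wd V E Q x y \<Longrightarrow> walk V Q x = Some Q1 \<Longrightarrow> rstep wd V E Q (x @ s) (y @ s)"
  proof -
    fix x y assume r: "rstep wd V E Q x y" and wx: "walk V Q x = Some Q1"
    then have wy: "walk V Q y = Some Q1" using 1 by blast
    from r obtain p' u v s' where "x = p' @ u @ s'" "y = p' @ v @ s'" "basic_rel wd E u v"
      "\<forall>g\<in>set x. allowed wd g" "\<forall>g\<in>set y. allowed wd g"
      unfolding rstep_def by blast
    moreover have "walk V Q (x @ s) \<noteq> None" "walk V Q (y @ s) \<noteq> None"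
      using assms(6) wx wy by (auto simp: walk_append)
    ultimately have e: "x @ s = p' @ u @ (s' @ s)" "y @ s = p' @ v @ (s' @ s)" "basic_rel wd E u v"
      "walk V Q (x @ s) \<noteq> None" "walk V Q (y @ s) \<noteq> None"
      "\<forall>g\<in>set (x @ s). allowed wd g" "\<forall>g\<in>set (y @ s). allowed wd g"
      using assms(5) by auto
    show "rstep wd V E Q (x @ s) (y @ s)"
      unfolding rstep_def using e by blast
  qed
  then show ?thesis
    using equivclp_map[where P = "\<lambda>x. walk V Q x = Some Q1" and r = "rstep wd V E Q"
        and r' = "rstep wd V E Q" and f = "\<lambda>x. x @ s"] assms(1,4) 1 unfolding word_eq_def by blast
qed

lemma weq_mono:
  assumes "word_eq False V E Q w w'" shows "word_eq wd V E Q w w'"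
proof -
  have "\<And>x y. rstep False V E Q x y \<Longrightarrow> rstep wd V E Q x y"
  proof -
    fix x y assume "rstep False V E Q x y"
    moreover have "\<And>u v. basic_rel False E u v \<Longrightarrow> basic_rel wd E u v"
      by (auto elim!: basic_rel.cases intro: basic_rel.intros)
    moreover have "\<And>g. allowed False g \<Longrightarrow> allowed wd g" by (auto simp: allowed_def)
    ultimately show "rstep wd V E Q x y" unfolding rstep_def by (metis (no_types, lifting))
  qed
  then show ?thesis
    using equivclp_map[where P = "\<lambda>_. True" and r = "rstep False V E Q" and r' = "rstep wd V E Q"
        and f = "\<lambda>x. x"] assms unfolding word_eq_def by blast
qed

lemma weq_cancel:
  assumes "walk V Q w = Some Q'" "\<forall>g\<in>set w. allowed wd g" "walk V Q s \<noteq> None"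
    "\<forall>g\<in>set s. allowed wd g"
  shows "word_eq wd V E Q (w @ rev w @ s) s"
  using assms
proof (induction w arbitrary: Q s)
  case Nil
  then show ?case by (simp add: word_eq_def)
next
  case (Cons g w)
  then obtain Q1 where g: "gen_step V Q g = Some Q1" and w: "walk V Q1 w = Some Q'"
    by (auto split: option.splits)
  have gb: "gen_step V Q1 g = Some Q" using gen_step_rev[OF g] .
  have "walk V Q1 (g # s) \<noteq> None" using gb Cons.prems(3) by simp
  moreover have "\<forall>g\<in>set w. allowed wd g" "\<forall>x\<in>set (g # s). allowed wd x"
    using Cons.prems by auto
  ultimately have "word_eq wd V E Q1 (w @ rev w @ (g # s)) (g # s)"
    using Cons.IH[OF w] by blast
  then have 1: "word_eq wd V E Q ([g] @ w @ rev w @ (g # s)) ([g] @ g # s)"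
    using weq_prefix[of V Q "[g]" Q1 wd E] g Cons.prems(2) by simp
  have "basic_rel wd E [g, g] []"
  proof (cases g)
    case (Sig i) then show ?thesis by (simp add: basic_rel.R1)
  next
    case Dl then have "wd" using Cons.prems(2) by (simp add: allowed_def)
    then show ?thesis using Dl by (simp add: basic_rel.R3)
  qed
  then have "rstep wd V E Q ([g, g] @ s) s"
    unfolding rstep_def using g gb Cons.prems(2,3,4)
    by (auto split: option.splits) (metis append.left_neutral append_Cons)
  then have 2: "word_eq wd V E Q ([g] @ g # s) s" unfolding word_eq_def by auto
  show ?case using equivclp_trans[OF 1[unfolded word_eq_def] 2[unfolded word_eq_def]]
    unfolding word_eq_def by simp
qed


locale grpctx =
  fixes wd :: bool and V :: "'v set" and E :: "('v \<times> 'v) set" and Q :: "('v \<times> 'v) set"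
  assumes symE: "sym E" and QE: "Q \<subseteq> E"
begin

abbreviation "G \<equiv> Aut_grp wd V E Q"
abbreviation "cls \<equiv> loop_class wd V E Q"
abbreviation "L \<equiv> loops wd V Q"
abbreviation "weq \<equiv> word_eq wd V E Q"

lemma weq_refl: "weq w w" by (simp add: word_eq_def)
lemma weq_sym: "weq w w' \<Longrightarrow> weq w' w" unfolding word_eq_def by (rule equivclp_sym)
lemma weq_trans: "weq a b \<Longrightarrow> weq b c \<Longrightarrow> weq a c" unfolding word_eq_def by (rule equivclp_trans)

lemma cls_loop: "a \<in> L \<Longrightarrow> cls a = {w. weq a w}"
  unfolding loop_class_def using weq_loops[OF _ symE QE] by blast

lemma cls_eq_iff: "a \<in> L \<Longrightarrow> b \<in> L \<Longrightarrow> cls a = cls b \<longleftrightarrow> weq a b"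
proof
  assume a: "a \<in> L" "b \<in> L" "cls a = cls b"
  then have "b \<in> cls a" using cls_loop[of b] weq_refl by auto
  then show "weq a b" using cls_loop[OF a(1)] by auto
next
  assume a: "a \<in> L" "b \<in> L" "weq a b"
  have "\<And>w. weq a w \<longleftrightarrow> weq b w"
    using weq_trans[OF a(3)] weq_trans[OF weq_sym[OF a(3)]] by blast
  then show "cls a = cls b" using cls_loop[OF a(1)] cls_loop[OF a(2)] by simp
qed

lemma loops_append: "a \<in> L \<Longrightarrow> b \<in> L \<Longrightarrow> a @ b \<in> L"
  unfolding loops_def by (auto simp: walk_append)

lemma loops_rev: "a \<in> L \<Longrightarrow> rev a \<in> L"
  unfolding loops_def using walk_rev by fastforce

lemma loops_Nil: "[] \<in> L" unfolding loops_def by simp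

lemma weq_concat:
  assumes "a \<in> L" "b \<in> L" "weq a a'" "weq b b'"
  shows "weq (a @ b) (a' @ b')"
proof -
  have a': "a' \<in> L" using weq_loops[OF assms(3) symE QE assms(1)] .
  have 1: "weq (a @ b) (a' @ b)"
    using weq_append[OF assms(3) symE QE, of Q b] assms(1,2) unfolding loops_def by auto
  have 2: "weq (a' @ b) (a' @ b')"
    using weq_prefix[of V Q a' Q wd E b b'] a' assms(4) unfolding loops_def by auto
  show ?thesis using weq_trans[OF 1 2] .
qed

lemma cls_mult: "a \<in> L \<Longrightarrow> b \<in> L \<Longrightarrow> cls a \<otimes>\<^bsub>G\<^esub> cls b = cls (a @ b)"
proof -
  assume a: "a \<in> L" and b: "b \<in> L"
  have *: "\<And>a' b'. a' \<in> cls a \<Longrightarrow> b' \<in> cls b \<Longrightarrow> cls (a' @ b') = cls (a @ b)"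
  proof -
    fix a' b' assume "a' \<in> cls a" "b' \<in> cls b"
    then have w: "weq a a'" "weq b b'" using cls_loop a b by auto
    then have l: "a' \<in> L" "b' \<in> L" using weq_loops[OF _ symE QE] a b by auto
    show "cls (a' @ b') = cls (a @ b)"
      using cls_eq_iff[OF loops_append[OF l] loops_append[OF a b]] weq_sym[OF weq_concat[OF a b w]]
      by simp
  qed
  have m: "a \<in> cls a" "b \<in> cls b" using cls_loop a b weq_refl by auto
  have "cls a \<otimes>\<^bsub>G\<^esub> cls b = (\<Union>a'\<in>cls a. \<Union>b'\<in>cls b. cls (a' @ b'))"
    unfolding Aut_grp_def by simp
  also have "\<dots> = cls (a @ b)"
  proof
    show "(\<Union>a'\<in>cls a. \<Union>b'\<in>cls b. cls (a' @ b')) \<subseteq> cls (a @ b)"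
      using * by blast
    show "cls (a @ b) \<subseteq> (\<Union>a'\<in>cls a. \<Union>b'\<in>cls b. cls (a' @ b'))"
      using m by blast
  qed
  finally show ?thesis .
qed

lemma carrier_G: "carrier G = cls ` L" unfolding Aut_grp_def by simp
lemma one_G: "\<one>\<^bsub>G\<^esub> = cls []" unfolding Aut_grp_def by simp

lemma group_G: "group G"
proof (rule groupI)
  fix x y assume "x \<in> carrier G" "y \<in> carrier G"
  then obtain a b where "a \<in> L" "b \<in> L" "x = cls a" "y = cls b" using carrier_G by auto
  then show "x \<otimes>\<^bsub>G\<^esub> y \<in> carrier G" using cls_mult loops_append carrier_G by auto
next
  show "\<one>\<^bsub>G\<^esub> \<in> carrier G" using one_G carrier_G loops_Nil by auto
next
  fix x y z assume "x \<in> carrier G" "y \<in> carrier G" "z \<in> carrier G"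
  then obtain a b c where "a \<in> L" "b \<in> L" "c \<in> L" "x = cls a" "y = cls b" "z = cls c"
    using carrier_G by auto
  then show "x \<otimes>\<^bsub>G\<^esub> y \<otimes>\<^bsub>G\<^esub> z = x \<otimes>\<^bsub>G\<^esub> (y \<otimes>\<^bsub>G\<^esub> z)"
    using cls_mult loops_append by simp
next
  fix x assume "x \<in> carrier G"
  then obtain a where "a \<in> L" "x = cls a" using carrier_G by auto
  then show "\<one>\<^bsub>G\<^esub> \<otimes>\<^bsub>G\<^esub> x = x" using cls_mult loops_Nil one_G by simp
next
  fix x assume "x \<in> carrier G"
  then obtain a where a: "a \<in> L" "x = cls a" using carrier_G by auto
  have ra: "rev a \<in> L" using loops_rev[OF a(1)] .
  have "weq (rev a @ rev (rev a) @ []) []"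
    using weq_cancel[of V Q "rev a" Q wd "[]" E] ra unfolding loops_def by auto
  then have "cls (rev a @ a) = cls []"
    using cls_eq_iff[of "rev a @ a" "[]"] loops_append[OF ra a(1)] loops_Nil by simp
  then show "\<exists>y\<in>carrier G. y \<otimes>\<^bsub>G\<^esub> x = \<one>\<^bsub>G\<^esub>"
    using cls_mult[OF ra a(1)] a carrier_G ra one_G by auto
qed

lemma cls_in: "a \<in> L \<Longrightarrow> cls a \<in> carrier G" using carrier_G by auto

lemma cls_pow: "a \<in> L \<Longrightarrow> cls a [^]\<^bsub>G\<^esub> (n::nat) = cls (concat (replicate n a))"
proof (induction n)
  case 0
  then show ?case using one_G by simp
next
  case (Suc n)
  have l: "concat (replicate n a) \<in> L"
    by (induction n) (use Suc.prems loops_Nil loops_append in auto)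
  have "cls a [^]\<^bsub>G\<^esub> Suc n = cls (concat (replicate n a)) \<otimes>\<^bsub>G\<^esub> cls a"
    using Suc by simp
  also have "\<dots> = cls (concat (replicate n a) @ a)" using cls_mult[OF l Suc.prems] .
  also have "concat (replicate n a) @ a = concat (replicate (Suc n) a)"
    by (simp add: replicate_append_same[symmetric])
  finally show ?case .
qed

end


fun sinkword :: "'v set \<Rightarrow> ('v \<times> 'v) set \<Rightarrow> 'v gen list \<Rightarrow> bool" where
  "sinkword V Q [] = True"
| "sinkword V Q (Sig i # w) = (i \<in> V \<and> is_sink Q i \<and> sinkword V (refl_at i Q) w)"
| "sinkword V Q (Dl # w) = False"

fun srcword :: "'v set \<Rightarrow> ('v \<times> 'v) set \<Rightarrow> 'v gen list \<Rightarrow> bool" where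
  "srcword V Q [] = True"
| "srcword V Q (Sig i # w) = (i \<in> V \<and> is_source Q i \<and> srcword V (refl_at i Q) w)"
| "srcword V Q (Dl # w) = False"

lemma rstepI:
  assumes "basic_rel wd E u v" "walk V Q (p @ u @ s) \<noteq> None" "walk V Q (p @ v @ s) \<noteq> None"
    "\<forall>g\<in>set (p @ u @ s). allowed wd g" "\<forall>g\<in>set (p @ v @ s). allowed wd g"
  shows "rstep wd V E Q (p @ u @ s) (p @ v @ s)"
  unfolding rstep_def using assms by blast

lemma sinkword_walk: "sinkword V Q w \<Longrightarrow> walk V Q w \<noteq> None"
  by (induction V Q w rule: sinkword.induct) auto

lemma srcword_walk: "srcword V Q w \<Longrightarrow> walk V Q w \<noteq> None"
  by (induction V Q w rule: srcword.induct) auto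

lemma sinkword_allowed: "sinkword V Q w \<Longrightarrow> \<forall>g\<in>set w. allowed wd g"
  by (induction V Q w rule: sinkword.induct) (auto simp: allowed_def)

lemma srcword_allowed: "srcword V Q w \<Longrightarrow> \<forall>g\<in>set w. allowed wd g"
  by (induction V Q w rule: srcword.induct) (auto simp: allowed_def)

lemma sinkword_append:
  "sinkword V Q (a @ b) \<longleftrightarrow> sinkword V Q a \<and> (\<exists>Q'. walk V Q a = Some Q' \<and> sinkword V Q' b)"
  by (induction V Q a rule: sinkword.induct) auto

lemma srcword_append:
  "srcword V Q (a @ b) \<longleftrightarrow> srcword V Q a \<and> (\<exists>Q'. walk V Q a = Some Q' \<and> srcword V Q' b)"
  by (induction V Q a rule: srcword.induct) auto

lemma sinkword_converse: "sinkword V (converse Q) w = srcword V Q w"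
  by (induction V Q w rule: srcword.induct) (auto simp: converse_refl_at)

lemma srcword_converse: "srcword V (converse Q) w = sinkword V Q w"
  using sinkword_converse[of V "converse Q" w] by simp

lemma srcword_rev:
  "srcword V Q w \<Longrightarrow> walk V Q w = Some Q' \<Longrightarrow> sinkword V Q' (rev w)"
proof (induction V Q w rule: srcword.induct)
  case (2 V Q i w)
  then have "walk V Q' (rev w) = Some (refl_at i Q)"
    using walk_rev by fastforce
  then show ?case using 2 by (auto simp: sinkword_append source_refl)
qed auto

lemma mset_no_Dl_sink: "sinkword V Q w \<Longrightarrow> Dl \<notin> set w"
  by (induction V Q w rule: sinkword.induct) auto

lemma mset_no_Dl_src: "srcword V Q w \<Longrightarrow> Dl \<notin> set w"
  by (induction V Q w rule: srcword.induct) auto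

definition cnt :: "'v gen list \<Rightarrow> 'v \<Rightarrow> nat" where
  "cnt u x = count (mset u) (Sig x)"

locale tree =
  fixes V :: "'v set" and E :: "('v \<times> 'v) set"
  assumes tree: "is_finite_tree V E"
begin

lemma finV: "finite V" using tree unfolding is_finite_tree_def by blast
lemma symE: "sym E" using tree unfolding is_finite_tree_def is_graph_def by blast
lemma EV: "E \<subseteq> V \<times> V" using tree unfolding is_finite_tree_def is_graph_def by blast
lemma irrE: "(a, a) \<notin> E" using tree unfolding is_finite_tree_def is_graph_def irrefl_def by blast
lemma conn: "x \<in> V \<Longrightarrow> y \<in> V \<Longrightarrow> (x, y) \<in> E\<^sup>*" using tree unfolding is_finite_tree_def by blast
lemma nocyc: "\<not> has_cycle V E" using tree unfolding is_finite_tree_def by blast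
lemma Vne: "V \<noteq> {}" using tree unfolding is_finite_tree_def by blast

lemma symE': "(a, b) \<in> E \<Longrightarrow> (b, a) \<in> E" using symE by (auto dest: symD)

lemma Quiv_sub: "Q \<in> Quiv V E \<Longrightarrow> Q \<subseteq> E" unfolding Quiv_def by blast

lemma Quiv_edge: "Q \<in> Quiv V E \<Longrightarrow> (a, b) \<in> E \<Longrightarrow> (a, b) \<in> Q \<longleftrightarrow> (b, a) \<notin> Q"
  unfolding Quiv_def by blast

lemma Quiv_notboth: "Q \<in> Quiv V E \<Longrightarrow> (a, b) \<in> Q \<Longrightarrow> (b, a) \<notin> Q"
  using Quiv_edge Quiv_sub by blast

lemma Quiv_refl: "Q \<in> Quiv V E \<Longrightarrow> refl_at i Q \<in> Quiv V E"
proof -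
  assume Q: "Q \<in> Quiv V E"
  have "refl_at i Q \<subseteq> E" using Quiv_sub[OF Q] symE' unfolding refl_at_def by auto
  moreover have "\<forall>(a, b)\<in>E. (a, b) \<in> refl_at i Q \<longleftrightarrow> (b, a) \<notin> refl_at i Q"
  proof (clarify)
    fix a b assume ab: "(a, b) \<in> E"
    have ba: "(b, a) \<in> E" using symE' ab .
    have "a \<noteq> b" using ab irrE by auto
    then show "(a, b) \<in> refl_at i Q \<longleftrightarrow> (b, a) \<notin> refl_at i Q"
      using Quiv_edge[OF Q ab] Quiv_edge[OF Q ba] unfolding refl_at_def by auto
  qed
  ultimately show ?thesis unfolding Quiv_def by blast
qed

lemma Quiv_converse: "Q \<in> Quiv V E \<Longrightarrow> converse Q \<in> Quiv V E"
  unfolding Quiv_def using symE' by auto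

lemma gen_step_Quiv: "Q \<in> Quiv V E \<Longrightarrow> gen_step V Q g = Some Q' \<Longrightarrow> Q' \<in> Quiv V E"
  by (cases g) (auto simp: Quiv_refl Quiv_converse split: if_splits)

lemma walk_Quiv: "Q \<in> Quiv V E \<Longrightarrow> walk V Q w = Some Q' \<Longrightarrow> Q' \<in> Quiv V E"
proof (induction w arbitrary: Q)
  case (Cons g w)
  then show ?case by (auto split: option.splits dest: gen_step_Quiv)
qed simp

lemma Quiv_eq:
  assumes Q: "Q \<in> Quiv V E" and Q': "Q' \<in> Quiv V E" and sub: "Q \<subseteq> Q'"
  shows "Q = Q'"
proof
  show "Q \<subseteq> Q'" by (fact sub)
  show "Q' \<subseteq> Q"
  proof
    fix x assume x: "x \<in> Q'"
    obtain a b where ab: "x = (a, b)" by (cases x)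
    have e: "(a, b) \<in> E" using Quiv_sub[OF Q'] x ab by auto
    show "x \<in> Q" using Quiv_edge[OF Q e] Quiv_edge[OF Q' e] sub x ab by blast
  qed
qed

abbreviation "weq0 Q \<equiv> word_eq False V E Q"

lemma weq0_refl: "weq0 Q w w" by (simp add: word_eq_def)
lemma weq0_sym: "weq0 Q w w' \<Longrightarrow> weq0 Q w' w" unfolding word_eq_def by (rule equivclp_sym)
lemma weq0_trans: "weq0 Q a b \<Longrightarrow> weq0 Q b c \<Longrightarrow> weq0 Q a c" unfolding word_eq_def by (rule equivclp_trans)

lemma no_arrow:
  assumes Q: "Q \<in> Quiv V E" and "(a, i) \<notin> E"
  shows "(a, i) \<notin> Q" "(i, a) \<notin> Q"
  using assms Quiv_sub[OF Q] symE' by auto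

lemma L4a:
  assumes "Q \<in> Quiv V E" "sinkword V Q (p @ Sig i # s)" "is_sink Q i" "Sig i \<notin> set p"
  shows "\<forall>g\<in>set p. \<exists>a. g = Sig a \<and> a \<noteq> i \<and> (a, i) \<notin> E"
  using assms
proof (induction p arbitrary: Q)
  case Nil
  then show ?case by simp
next
  case (Cons g p)
  from Cons.prems obtain a where g: "g = Sig a" by (cases g) auto
  with Cons.prems have a: "a \<in> V" "is_sink Q a" "sinkword V (refl_at a Q) (p @ Sig i # s)" "a \<noteq> i"
    by auto
  have nE: "(a, i) \<notin> E"
  proof
    assume ai: "(a, i) \<in> E"
    have "(i, a) \<notin> Q" using Cons.prems(3) unfolding is_sink_def by blast
    then have "(a, i) \<in> Q" using Quiv_edge[OF Cons.prems(1) symE'[OF ai]] by blast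
    then show False using a(2) unfolding is_sink_def by blast
  qed
  have "is_sink (refl_at a Q) i"
    using sink_refl_other(1)[OF a(4) no_arrow[OF Cons.prems(1) nE]] Cons.prems(3) by simp
  then have "\<forall>g\<in>set p. \<exists>a. g = Sig a \<and> a \<noteq> i \<and> (a, i) \<notin> E"
    using Cons.IH[OF Quiv_refl[OF Cons.prems(1)] a(3)] Cons.prems(4) by simp
  then show ?case using g a(4) nE by simp
qed

lemma L4b:
  assumes "Q \<in> Quiv V E" "sinkword V Q (p @ Sig i # s)" "is_sink Q i"
    "\<forall>g\<in>set p. \<exists>a. g = Sig a \<and> a \<noteq> i \<and> (a, i) \<notin> E"
  shows "sinkword V Q (Sig i # p @ s) \<and> weq0 Q (p @ Sig i # s) (Sig i # p @ s)"
  using assms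
proof (induction p arbitrary: Q)
  case Nil
  then show ?case using weq0_refl by simp
next
  case (Cons g p)
  from Cons.prems(4) obtain a where g: "g = Sig a" and ai: "a \<noteq> i" "(a, i) \<notin> E" by auto
  with Cons.prems have a: "a \<in> V" "is_sink Q a" "sinkword V (refl_at a Q) (p @ Sig i # s)"
    by auto
  note na = no_arrow[OF Cons.prems(1) ai(2)]
  have isk: "is_sink (refl_at a Q) i"
    using sink_refl_other(1)[OF ai(1) na] Cons.prems(3) by simp
  have IH: "sinkword V (refl_at a Q) (Sig i # p @ s) \<and>
      weq0 (refl_at a Q) (p @ Sig i # s) (Sig i # p @ s)"
    using Cons.IH[OF Quiv_refl[OF Cons.prems(1)] a(3) isk] Cons.prems(4) by simp
  then have iV: "i \<in> V" and rest: "sinkword V (refl_at i (refl_at a Q)) (p @ s)" by auto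
  have na': "(i, a) \<notin> Q" "(a, i) \<notin> Q" using na by auto
  have ask: "is_sink (refl_at i Q) a"
    using sink_refl_other(1)[of i a Q] ai(1) na a(2) by auto
  have comm: "refl_at a (refl_at i Q) = refl_at i (refl_at a Q)"
    using refl_at_comm[of a i Q] na by simp
  have sw: "sinkword V Q (Sig i # Sig a # p @ s)"
    using iV Cons.prems(3) ask a(1) rest comm by simp
  have 1: "weq0 Q ([Sig a] @ p @ Sig i # s) ([Sig a] @ Sig i # p @ s)"
    using weq_prefix[of V Q "[Sig a]" "refl_at a Q" False] IH a(1,2) by (simp add: allowed_def)
  have sw2: "sinkword V Q (Sig a # Sig i # p @ s)" using a(1,2) IH by simp
  have "rstep False V E Q ([] @ [Sig a, Sig i] @ (p @ s)) ([] @ [Sig i, Sig a] @ (p @ s))"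
    apply (rule rstepI)
    using basic_rel.R2[of a i E False] ai(2) sinkword_walk[OF sw] sinkword_walk[OF sw2]
      sinkword_allowed[OF sw] sinkword_allowed[OF sw2] by auto
  then have 2: "weq0 Q (Sig a # Sig i # p @ s) (Sig i # Sig a # p @ s)"
    unfolding word_eq_def by auto
  show ?case using sw weq0_trans[OF 1[simplified] 2] g by simp
qed

lemma up_unique:
  assumes "Q \<in> Quiv V E" "sinkword V Q u" "sinkword V Q u'" "mset u = mset u'"
  shows "weq0 Q u u'"
  using assms
proof (induction u arbitrary: Q u')
  case Nil
  then show ?case using weq0_refl by simp
next
  case (Cons g t)
  from Cons.prems obtain i where g: "g = Sig i" by (cases g) auto
  with Cons.prems have i: "i \<in> V" "is_sink Q i" "sinkword V (refl_at i Q) t" by auto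
  have "Sig i \<in> set u'" using Cons.prems(4) g by (metis list.set_intros(1) set_mset_mset)
  then obtain p s where u': "u' = p @ Sig i # s" "Sig i \<notin> set p"
    by (meson split_list_first)
  have A: "\<forall>g\<in>set p. \<exists>a. g = Sig a \<and> a \<noteq> i \<and> (a, i) \<notin> E"
    using L4a[OF Cons.prems(1) _ i(2) u'(2)] Cons.prems(3) u'(1) by simp
  have B: "sinkword V Q (Sig i # p @ s) \<and> weq0 Q (p @ Sig i # s) (Sig i # p @ s)"
    using L4b[OF Cons.prems(1) _ i(2) A] Cons.prems(3) u'(1) by simp
  have ms: "mset t = mset (p @ s)" using Cons.prems(4) g u'(1) by simp
  have "weq0 (refl_at i Q) t (p @ s)"
    using Cons.IH[OF Quiv_refl[OF Cons.prems(1)] i(3) _ ms] B by simp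
  then have "weq0 Q ([Sig i] @ t) ([Sig i] @ p @ s)"
    using weq_prefix[of V Q "[Sig i]" "refl_at i Q" False] i by (simp add: allowed_def)
  then show ?case using weq0_sym[OF conjunct2[OF B]] weq0_trans g u'(1) by simp
qed

end


context tree
begin

lemma push:
  assumes "Q \<in> Quiv V E" "i \<in> V" "is_sink Q i" "srcword V (refl_at i Q) D"
    "walk V (refl_at i Q) D = Some Q2" "sinkword V Q2 U"
  shows "\<exists>D0 U0 Q3. srcword V Q D0 \<and> walk V Q D0 = Some Q3 \<and> sinkword V Q3 U0 \<and>
           weq0 Q (Sig i # D @ U) (D0 @ U0)"
  using assms
proof (induction D arbitrary: Q)
  case Nil
  then have "sinkword V Q (Sig i # U)" by simp
  then show ?case using weq0_refl[of Q "Sig i # U"]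
    by (intro exI[of _ "[]"] exI[of _ "Sig i # U"] exI[of _ Q]) simp
next
  case (Cons g D')
  from Cons.prems(4) obtain j where g: "g = Sig j" by (cases g) auto
  let ?Q1 = "refl_at i Q"
  from Cons.prems g have j: "j \<in> V" "is_source ?Q1 j" "srcword V (refl_at j ?Q1) D'"
    "walk V (refl_at j ?Q1) D' = Some Q2" by (auto split: if_splits)
  have wDU: "walk V (refl_at j ?Q1) (D' @ U) \<noteq> None"
    using j(4) sinkword_walk[OF Cons.prems(6)] by (simp add: walk_append)
  have alDU: "\<forall>g\<in>set (D' @ U). allowed False g"
    using srcword_allowed[OF j(3)] sinkword_allowed[OF Cons.prems(6)] by auto
  show ?case
  proof (cases "j = i")
    case True
    have "rstep False V E Q ([] @ [Sig i, Sig i] @ (D' @ U)) ([] @ [] @ (D' @ U))"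
      apply (rule rstepI)
      using basic_rel.R1 Cons.prems(2,3) sink_refl[OF Cons.prems(3)] wDU True alDU
      by (auto simp: allowed_def)
    then have "weq0 Q (Sig i # Sig i # D' @ U) (D' @ U)" unfolding word_eq_def by auto
    then show ?thesis using j True Cons.prems(6) g
      by (intro exI[of _ D'] exI[of _ U] exI[of _ Q2]) auto
  next
    case False
    have nE: "(i, j) \<notin> E"
    proof
      assume ij: "(i, j) \<in> E"
      have "(i, j) \<notin> Q" using Cons.prems(3) unfolding is_sink_def by blast
      then have "(j, i) \<in> Q" using Quiv_edge[OF Cons.prems(1) ij] by blast
      then have "(i, j) \<in> ?Q1" unfolding refl_at_def by auto
      then show False using j(2) unfolding is_source_def by blast
    qed
    note na = no_arrow[OF Cons.prems(1) nE]
    have jsQ: "is_source Q j"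
      using sink_refl_other(2)[of i j Q] False na j(2) by auto
    let ?Q' = "refl_at j Q"
    have isk: "is_sink ?Q' i"
      using sink_refl_other(1)[of j i Q] False na Cons.prems(3) by auto
    have comm: "refl_at i ?Q' = refl_at j ?Q1" using refl_at_comm[of i j Q] na by simp
    obtain D0 U0 Q3 where IH: "srcword V ?Q' D0" "walk V ?Q' D0 = Some Q3" "sinkword V Q3 U0"
      "weq0 ?Q' (Sig i # D' @ U) (D0 @ U0)"
      using Cons.IH[OF Quiv_refl[OF Cons.prems(1)] Cons.prems(2) isk _ _ Cons.prems(6)] comm j
      by auto
    have 1: "weq0 Q (Sig i # Sig j # D' @ U) (Sig j # Sig i # D' @ U)"
    proof -
      have "rstep False V E Q ([] @ [Sig i, Sig j] @ (D' @ U)) ([] @ [Sig j, Sig i] @ (D' @ U))"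
        apply (rule rstepI)
        using basic_rel.R2[of i j E False] nE Cons.prems(2,3) j(1,2) jsQ isk wDU alDU comm
        by (auto simp: allowed_def)
      then show ?thesis unfolding word_eq_def by auto
    qed
    have 2: "weq0 Q ([Sig j] @ Sig i # D' @ U) ([Sig j] @ D0 @ U0)"
      using weq_prefix[of V Q "[Sig j]" ?Q' False] IH(4) j(1) jsQ by (simp add: allowed_def)
    show ?thesis using weq0_trans[OF 1 2[simplified]] IH(1,2,3) j(1) jsQ g
      by (intro exI[of _ "Sig j # D0"] exI[of _ U0] exI[of _ Q3]) auto
  qed
qed

lemma normalize:
  assumes "Q \<in> Quiv V E" "walk V Q w \<noteq> None" "\<forall>g\<in>set w. allowed False g"
  shows "\<exists>D U Q2. srcword V Q D \<and> walk V Q D = Some Q2 \<and> sinkword V Q2 U \<and> weq0 Q w (D @ U)"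
  using assms
proof (induction w arbitrary: Q)
  case Nil
  then show ?case using weq0_refl[of Q "[]"]
    by (intro exI[of _ "[]"] exI[of _ "[]"] exI[of _ Q]) simp
next
  case (Cons g w)
  from Cons.prems(3) obtain i where g: "g = Sig i" by (cases g) (auto simp: allowed_def)
  from Cons.prems(2) g have i: "i \<in> V" "is_source Q i \<or> is_sink Q i"
    "walk V (refl_at i Q) w \<noteq> None" by (auto split: if_splits)
  obtain D U Q2 where IH: "srcword V (refl_at i Q) D" "walk V (refl_at i Q) D = Some Q2"
    "sinkword V Q2 U" "weq0 (refl_at i Q) w (D @ U)"
    using Cons.IH[OF Quiv_refl[OF Cons.prems(1)] i(3)] Cons.prems(3) by auto
  have 1: "weq0 Q ([Sig i] @ w) ([Sig i] @ D @ U)"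
    using weq_prefix[of V Q "[Sig i]" "refl_at i Q" False] IH(4) i(1,2) by (auto simp: allowed_def)
  show ?case
  proof (cases "is_sink Q i")
    case True
    obtain D0 U0 Q3 where P: "srcword V Q D0" "walk V Q D0 = Some Q3" "sinkword V Q3 U0"
      "weq0 Q (Sig i # D @ U) (D0 @ U0)"
      using push[OF Cons.prems(1) i(1) True IH(1,2,3)] by blast
    show ?thesis using weq0_trans[OF 1[simplified] P(4)] P(1,2,3) g by blast
  next
    case False
    then have "is_source Q i" using i(2) by blast
    then show ?thesis using 1 IH i(1) g
      by (intro exI[of _ "Sig i # D"] exI[of _ U] exI[of _ Q2]) auto
  qed
qed

lemma cnt_append: "cnt (u @ v) x = cnt u x + cnt v x" unfolding cnt_def by simp
lemma cnt_Nil[simp]: "cnt [] x = 0" unfolding cnt_def by simp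
lemma cnt_single: "cnt [Sig i] x = (if x = i then 1 else 0)" unfolding cnt_def by simp
lemma cnt_Cons: "cnt (Sig i # u) x = cnt u x + (if x = i then 1 else 0)" unfolding cnt_def by simp

lemma sink_count:
  assumes "Q \<in> Quiv V E" "sinkword V Q u" "walk V Q u = Some Q'" "(a, b) \<in> Q"
  shows "(cnt u b = cnt u a \<and> (a, b) \<in> Q') \<or> (cnt u b = Suc (cnt u a) \<and> (b, a) \<in> Q')"
  using assms(2,3)
proof (induction u arbitrary: Q' rule: rev_induct)
  case Nil
  then show ?case using assms(4) by simp
next
  case (snoc g u)
  from snoc.prems obtain Qm where u: "sinkword V Q u" "walk V Q u = Some Qm" "sinkword V Qm [g]"
    "walk V Qm [g] = Some Q'"
    by (auto simp: sinkword_append walk_append split: option.splits)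
  from u(3) obtain i where g: "g = Sig i" by (cases g) auto
  with u have i: "i \<in> V" "is_sink Qm i" "Q' = refl_at i Qm" by (auto split: if_splits)
  have IH: "(cnt u b = cnt u a \<and> (a, b) \<in> Qm) \<or> (cnt u b = Suc (cnt u a) \<and> (b, a) \<in> Qm)"
    using snoc.IH[OF u(1,2)] .
  have ab: "a \<noteq> b" using assms(4) Quiv_sub[OF assms(1)] irrE by auto
  show ?case
  proof (cases "a = i \<or> b = i")
    case False
    then show ?thesis using IH i(3) g unfolding refl_at_def by (auto simp: cnt_append cnt_single)
  next
    case True
    then show ?thesis
    proof
      assume ai: "a = i"
      then have "(i, b) \<notin> Qm" using i(2) unfolding is_sink_def by blast
      then have "cnt u b = Suc (cnt u a) \<and> (b, a) \<in> Qm" using IH ai by blast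
      then show ?thesis using ai ab i(3) g unfolding refl_at_def by (auto simp: cnt_append cnt_single)
    next
      assume bi: "b = i"
      then have "(i, a) \<notin> Qm" using i(2) unfolding is_sink_def by blast
      then have "cnt u b = cnt u a \<and> (a, b) \<in> Qm" using IH bi by blast
      then show ?thesis using bi ab i(3) g unfolding refl_at_def by (auto simp: cnt_append cnt_single)
    qed
  qed
qed

end


lemma nb_cycle:
  fixes x :: "nat \<Rightarrow> 'v"
  assumes fin: "finite V" and irr: "\<And>a. (a, a) \<notin> E" and xV: "\<And>n. x n \<in> V"
    and xE: "\<And>n. (x n, x (Suc n)) \<in> E" and nb: "\<And>n. x (Suc (Suc n)) \<noteq> x n"
  shows "has_cycle V E"
proof -
  have "finite (range x)" using xV fin by (meson finite_subset image_subsetI)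
  then have "\<not> inj x" using finite_imageD by (metis infinite_UNIV_nat)
  then obtain i j where "i \<noteq> j" "x i = x j" unfolding inj_def by blast
  then have ex: "\<exists>j. \<exists>i<j. x i = x j" by (metis linorder_neqE_nat)
  define j0 where "j0 = (LEAST j. \<exists>i<j. x i = x j)"
  have "\<exists>i<j0. x i = x j0" unfolding j0_def by (rule LeastI_ex[OF ex])
  then obtain i0 where i0: "i0 < j0" "x i0 = x j0" by blast
  have minl: "\<And>a b. a < b \<Longrightarrow> b < j0 \<Longrightarrow> x a \<noteq> x b"
  proof
    fix a b assume "a < b" "b < j0" "x a = x b"
    then have "\<exists>i<b. x i = x b" by blast
    then have "j0 \<le> b" unfolding j0_def by (rule Least_le)
    then show False using \<open>b < j0\<close> by simp
  qed
  define xs where "xs = map x [i0..<j0]"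
  have len: "length xs = j0 - i0" unfolding xs_def by simp
  have "j0 \<noteq> Suc i0" using i0 xE[of i0] irr by metis
  moreover have "j0 \<noteq> Suc (Suc i0)" using i0 nb[of i0] by metis
  ultimately have l3: "length xs \<ge> 3" using len i0(1) by linarith
  have "inj_on x {i0..<j0}"
    unfolding inj_on_def using minl by (metis atLeastLessThan_iff linorder_neqE_nat)
  then have dist: "distinct xs" unfolding xs_def by (simp add: distinct_map)
  have sub: "set xs \<subseteq> V" unfolding xs_def using xV by auto
  have cons: "\<forall>k. Suc k < length xs \<longrightarrow> (xs ! k, xs ! Suc k) \<in> E"
    unfolding xs_def using xE by (simp add: add.commute)
  have "last xs = x (j0 - 1)" unfolding xs_def using i0(1) by (simp add: last_map)
  moreover have "hd xs = x i0" unfolding xs_def using i0(1) by (simp add: hd_map)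
  moreover have "(x (j0 - 1), x j0) \<in> E" using xE[of "j0 - 1"] i0(1) by simp
  ultimately have "(last xs, hd xs) \<in> E" using i0(2) by simp
  then show ?thesis unfolding has_cycle_def using l3 dist sub cons by blast
qed

context tree
begin

lemma sink_exists:
  assumes Q: "Q \<in> Quiv V E" and R: "R \<subseteq> V" "R \<noteq> {}"
  shows "\<exists>r\<in>R. \<forall>y\<in>R. (r, y) \<notin> Q"
proof (rule ccontr)
  assume "\<not> ?thesis"
  then have "\<forall>r\<in>R. \<exists>y. y \<in> R \<and> (r, y) \<in> Q" by blast
  then obtain f where f: "\<forall>r\<in>R. f r \<in> R \<and> (r, f r) \<in> Q" by metis
  obtain r0 where r0: "r0 \<in> R" using R by blast
  define x where "x n = (f ^^ n) r0" for n
  have xR: "x n \<in> R" for n unfolding x_def by (induction n) (use r0 f in auto)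
  have xQ: "(x n, x (Suc n)) \<in> Q" for n using f xR[of n] unfolding x_def by simp
  have "has_cycle V E"
  proof (rule nb_cycle[OF finV irrE])
    show "x n \<in> V" for n using xR R by blast
    show "(x n, x (Suc n)) \<in> E" for n using xQ Quiv_sub[OF Q] by blast
    show "x (Suc (Suc n)) \<noteq> x n" for n
      using xQ[of n] xQ[of "Suc n"] Quiv_notboth[OF Q] by metis
  qed
  then show False using nocyc by blast
qed

lemma sw_exists:
  assumes "Q \<in> Quiv V E" "\<forall>v. v \<notin> V \<longrightarrow> c v = 0" "\<forall>(a, b)\<in>Q. c b = c a \<or> c b = Suc (c a)"
  shows "\<exists>u. sinkword V Q u \<and> (\<forall>x. cnt u x = c x)"
  using assms
proof (induction "sum c V" arbitrary: Q c rule: less_induct)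
  case less
  show ?case
  proof (cases "\<forall>v\<in>V. c v = 0")
    case True
    then have "\<forall>x. cnt [] x = c x" using less.prems(2) by auto
    then show ?thesis by (intro exI[of _ "[]"]) simp
  next
    case False
    define m where "m = Max (c ` V)"
    define M where "M = {v\<in>V. c v = m}"
    have mge: "\<And>v. v \<in> V \<Longrightarrow> c v \<le> m" unfolding m_def using finV by simp
    have "m \<in> c ` V" unfolding m_def using finV Vne by simp
    then have Mne: "M \<noteq> {}" unfolding M_def by auto
    have mpos: "m > 0" using False mge by fastforce
    obtain r where r: "r \<in> M" "\<forall>y\<in>M. (r, y) \<notin> Q"
      using sink_exists[OF less.prems(1) _ Mne] unfolding M_def by blast
    have rV: "r \<in> V" and cr: "c r = m" using r(1) unfolding M_def by auto
    have rsink: "is_sink Q r"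
      unfolding is_sink_def
    proof
      fix j show "(r, j) \<notin> Q"
      proof
        assume rj: "(r, j) \<in> Q"
        then have jV: "j \<in> V" using Quiv_sub[OF less.prems(1)] EV by auto
        have "c j = c r \<or> c j = Suc (c r)" using less.prems(3) rj by auto
        then have "c j = m" using mge[OF jV] cr by auto
        then show False using r(2) jV rj unfolding M_def by auto
      qed
    qed
    define c' where "c' = c(r := c r - 1)"
    have sumc: "sum c V = c r + sum c (V - {r})" using finV rV by (simp add: sum.remove)
    have sumc': "sum c' V = c' r + sum c' (V - {r})" using finV rV by (simp add: sum.remove)
    have "sum c' (V - {r}) = sum c (V - {r})" unfolding c'_def by (intro sum.cong) auto
    then have lt: "sum c' V < sum c V" using sumc sumc' cr mpos unfolding c'_def by simp
    have Q': "refl_at r Q \<in> Quiv V E" using Quiv_refl[OF less.prems(1)] .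
    have c'out: "\<forall>v. v \<notin> V \<longrightarrow> c' v = 0" using less.prems(2) rV unfolding c'_def by auto
    have c'cond0: "c' b = c' a \<or> c' b = Suc (c' a)" if ab: "(a, b) \<in> refl_at r Q" for a b
      proof (cases "a = r \<or> b = r")
        case False
        then have "(a, b) \<in> Q" using ab unfolding refl_at_def by auto
        then show ?thesis using less.prems(3) False unfolding c'_def by auto
      next
        case True
        have "(b, a) \<in> Q" using ab True unfolding refl_at_def by auto
        then have ar: "a = r" "b \<noteq> r" using True rsink irrE Quiv_sub[OF less.prems(1)]
          unfolding is_sink_def by auto
        have "c r = c b \<or> c r = Suc (c b)" using less.prems(3) \<open>(b, a) \<in> Q\<close> ar by auto
        then show ?thesis using ar cr mpos unfolding c'_def by auto
      qed
    have c'cond: "\<forall>(a, b)\<in>refl_at r Q. c' b = c' a \<or> c' b = Suc (c' a)"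
      using c'cond0 by blast
    obtain u where u: "sinkword V (refl_at r Q) u" "\<forall>x. cnt u x = c' x"
      using less.hyps[OF lt Q' c'out c'cond] by blast
    have "sinkword V Q (Sig r # u)" using u(1) rV rsink by simp
    moreover have "\<forall>x. cnt (Sig r # u) x = c x"
      using u(2) cr mpos unfolding c'_def by (auto simp: cnt_Cons)
    ultimately show ?thesis by blast
  qed
qed

end

lemma has_cycle_mono: "V' \<subseteq> V \<Longrightarrow> E' \<subseteq> E \<Longrightarrow> has_cycle V' E' \<Longrightarrow> has_cycle V E"
  unfolding has_cycle_def by (meson order_trans subsetD)

fun nbw :: "('v \<Rightarrow> 'v \<Rightarrow> 'v) \<Rightarrow> 'v \<times> 'v \<Rightarrow> nat \<Rightarrow> 'v \<times> 'v" where
  "nbw g p 0 = p"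
| "nbw g p (Suc n) = (snd (nbw g p n), g (snd (nbw g p n)) (fst (nbw g p n)))"

lemma leaf_exists:
  assumes fin: "finite V" and ne: "V \<noteq> {}" and irr: "\<And>a. (a, a) \<notin> E" and EV: "E \<subseteq> V \<times> V"
    and nc: "\<not> has_cycle V E"
  shows "\<exists>v\<in>V. \<forall>u1 u2. (v, u1) \<in> E \<longrightarrow> (v, u2) \<in> E \<longrightarrow> u1 = u2"
proof (rule ccontr)
  assume "\<not> ?thesis"
  then have two: "\<forall>v\<in>V. \<exists>u1 u2. (v, u1) \<in> E \<and> (v, u2) \<in> E \<and> u1 \<noteq> u2" by blast
  then have ex: "\<forall>v\<in>V. \<forall>p. \<exists>y. (v, y) \<in> E \<and> y \<noteq> p" by metis
  define g where "g v p = (SOME y. (v, y) \<in> E \<and> y \<noteq> p)" for v p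
  have g: "v \<in> V \<Longrightarrow> (v, g v p) \<in> E \<and> g v p \<noteq> p" for v p
    unfolding g_def using ex by (metis (mono_tags, lifting) someI_ex)
  obtain v0 where v0: "v0 \<in> V" using ne by blast
  obtain v1 where v1: "(v0, v1) \<in> E" using two v0 by blast
  define z where "z = nbw g (v0, v1)"
  have inv: "fst (z n) \<in> V \<and> (fst (z n), snd (z n)) \<in> E" for n
  proof (induction n)
    case 0 then show ?case using v0 v1 unfolding z_def by simp
  next
    case (Suc n)
    have "snd (z n) \<in> V" using Suc EV by auto
    then show ?case using g unfolding z_def by simp
  qed
  define x where "x n = fst (z n)" for n
  have "has_cycle V E"
  proof (rule nb_cycle[OF fin irr])
    show "x n \<in> V" for n using inv unfolding x_def by blast
    show "(x n, x (Suc n)) \<in> E" for n using inv[of n] unfolding x_def z_def by simp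
    show "x (Suc (Suc n)) \<noteq> x n" for n
    proof -
      have "snd (z n) \<in> V" using inv[of n] EV by auto
      then show ?thesis using g unfolding x_def z_def by simp
    qed
  qed
  then show False using nc by blast
qed

lemma height_exists:
  assumes "finite V" "is_graph V E" "\<not> has_cycle V E" "Q \<in> Quiv V E"
  shows "\<exists>h::'v \<Rightarrow> int. \<forall>(a, b)\<in>Q. h a = h b + 1"
  using assms
proof (induction "card V" arbitrary: V E Q rule: less_induct)
  case less
  have EV: "E \<subseteq> V \<times> V" and symE: "sym E" and irr: "\<And>a. (a, a) \<notin> E"
    using less.prems(2) unfolding is_graph_def irrefl_def by auto
  have QE: "Q \<subseteq> E" using less.prems(4) unfolding Quiv_def by blast
  show ?case
  proof (cases "V = {}")
    case True
    then have "Q = {}" using QE EV by auto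
    then show ?thesis by simp
  next
    case False
    obtain v where v: "v \<in> V" "\<forall>u1 u2. (v, u1) \<in> E \<longrightarrow> (v, u2) \<in> E \<longrightarrow> u1 = u2"
      using leaf_exists[OF less.prems(1) False irr EV less.prems(3)] by blast
    define V' where "V' = V - {v}"
    define E' where "E' = E \<inter> (V' \<times> V')"
    define Q' where "Q' = Q \<inter> (V' \<times> V')"
    have card: "card V' < card V" unfolding V'_def using card_Diff1_less[OF less.prems(1) v(1)] .
    have g': "is_graph V' E'"
      using symE irr unfolding is_graph_def E'_def sym_def irrefl_def by auto
    have nc': "\<not> has_cycle V' E'"
      using has_cycle_mono[of V' V E' E] less.prems(3) unfolding V'_def E'_def by auto
    have q': "Q' \<in> Quiv V' E'"
      using less.prems(4) unfolding Quiv_def Q'_def E'_def by auto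
    obtain h' :: "'v \<Rightarrow> int" where h': "\<forall>(a, b)\<in>Q'. h' a = h' b + 1"
      using less.hyps[OF card _ g' nc' q'] less.prems(1) unfolding V'_def by auto
    show ?thesis
    proof (cases "\<exists>u. (v, u) \<in> E")
      case False
      have "\<forall>(a, b)\<in>Q. h' a = h' b + 1"
      proof (clarify)
        fix a b assume ab: "(a, b) \<in> Q"
        then have "a \<noteq> v" "b \<noteq> v" using False QE symE by (auto dest: symD)
        then have "(a, b) \<in> Q'" using ab QE EV unfolding Q'_def V'_def by auto
        then show "h' a = h' b + 1" using h' by auto
      qed
      then show ?thesis by blast
    next
      case True
      then obtain u where u: "(v, u) \<in> E" by blast
      define h where "h = h'(v := (if (v, u) \<in> Q then h' u + 1 else h' u - 1))"
      have "\<forall>(a, b)\<in>Q. h a = h b + 1"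
      proof (clarify)
        fix a b assume ab: "(a, b) \<in> Q"
        have abE: "(a, b) \<in> E" using ab QE by auto
        have uv: "u \<noteq> v" using u irr by auto
        show "h a = h b + 1"
        proof (cases "a = v")
          case True
          then have "b = u" using v(2) abE u by blast
          then show ?thesis using True ab uv unfolding h_def by simp
        next
          case av: False
          show ?thesis
          proof (cases "b = v")
            case True
            then have "(v, a) \<in> E" using abE symE by (auto dest: symD)
            then have "a = u" using v(2) u by blast
            then have "(v, u) \<notin> Q" using ab True less.prems(4) abE unfolding Quiv_def by auto
            then show ?thesis using True \<open>a = u\<close> uv unfolding h_def by simp
          next
            case False
            then have "(a, b) \<in> Q'" using ab av abE EV unfolding Q'_def V'_def by auto
            then show ?thesis using h' av False unfolding h_def by auto
          qed
        qed
      qed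
      then show ?thesis by blast
    qed
  qed
qed


lemma sinkword_cnt_out: "sinkword V Q u \<Longrightarrow> x \<notin> V \<Longrightarrow> cnt u x = 0"
  by (induction V Q u rule: sinkword.induct) (auto simp: cnt_def)

locale treeG = tree +
  fixes \<Gamma> :: "('a \<times> 'a) set"
  assumes GQ: "\<Gamma> \<in> Quiv V E"
begin

lemma GE: "\<Gamma> \<subseteq> E" using Quiv_sub[OF GQ] .

lemma cox_ex: "\<exists>u. sinkword V \<Gamma> u \<and> walk V \<Gamma> u = Some \<Gamma> \<and> (\<forall>x. cnt u x = (if x \<in> V then 1 else 0))"
proof -
  let ?c = "\<lambda>x. if x \<in> V then 1 else (0::nat)"
  have "\<forall>(a, b)\<in>\<Gamma>. ?c b = ?c a \<or> ?c b = Suc (?c a)" using GE EV by auto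
  then obtain u where u: "sinkword V \<Gamma> u" "\<forall>x. cnt u x = ?c x"
    using sw_exists[OF GQ, of ?c] by auto
  obtain Q' where Q': "walk V \<Gamma> u = Some Q'" using sinkword_walk[OF u(1)] by auto
  have "\<Gamma> \<subseteq> Q'"
  proof
    fix x assume x: "x \<in> \<Gamma>"
    obtain a b where ab: "x = (a, b)" by (cases x)
    have "a \<in> V" "b \<in> V" using x ab GE EV by auto
    then show "x \<in> Q'" using sink_count[OF GQ u(1) Q', of a b] x ab u(2) by auto
  qed
  then have "Q' = \<Gamma>" using Quiv_eq[OF GQ walk_Quiv[OF GQ Q']] by simp
  then show ?thesis using u Q' by blast
qed

definition "cox = (SOME u. sinkword V \<Gamma> u \<and> walk V \<Gamma> u = Some \<Gamma> \<and> (\<forall>x. cnt u x = (if x \<in> V then 1 else 0)))"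

lemma cox: "sinkword V \<Gamma> cox" "walk V \<Gamma> cox = Some \<Gamma>" "cnt cox x = (if x \<in> V then 1 else 0)"
  using someI_ex[OF cox_ex] unfolding cox_def by blast+

definition "coxp k = concat (replicate k cox)"

lemma coxp: "sinkword V \<Gamma> (coxp k)" "walk V \<Gamma> (coxp k) = Some \<Gamma>"
  "cnt (coxp k) x = (if x \<in> V then k else 0)"
proof (induction k)
  case 0
  show "sinkword V \<Gamma> (coxp 0)" "walk V \<Gamma> (coxp 0) = Some \<Gamma>" "cnt (coxp 0) x = (if x \<in> V then 0 else 0)"
    unfolding coxp_def by simp_all
next
  case (Suc k)
  have e: "coxp (Suc k) = cox @ coxp k" unfolding coxp_def by simp
  show "sinkword V \<Gamma> (coxp (Suc k))" using Suc cox unfolding e by (auto simp: sinkword_append)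
  show "walk V \<Gamma> (coxp (Suc k)) = Some \<Gamma>" using Suc cox unfolding e by (auto simp: walk_append)
  show "cnt (coxp (Suc k)) x = (if x \<in> V then Suc k else 0)"
    using Suc cox unfolding e by (auto simp: cnt_append)
qed

lemma coxp_allowed: "\<forall>g\<in>set (coxp k). allowed wd g"
  using sinkword_allowed[OF coxp(1)] .

lemma mset_eq_cnt:
  assumes "Dl \<notin> set u" "Dl \<notin> set u'" "\<And>x. cnt u x = cnt u' x"
  shows "mset u = mset u'"
proof (rule multiset_eqI)
  fix g show "count (mset u) g = count (mset u') g"
  proof (cases g)
    case (Sig x) then show ?thesis using assms(3)[of x] unfolding cnt_def by simp
  next
    case Dl then show ?thesis using assms(1,2) by (metis count_eq_zero_iff set_mset_mset)
  qed
qed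

lemma R0_loop:
  assumes w: "walk V \<Gamma> w = Some \<Gamma>" "\<forall>g\<in>set w. allowed False g"
  shows "(\<exists>k. weq0 \<Gamma> w (coxp k)) \<or> (\<exists>m. weq0 \<Gamma> (w @ coxp m) [])"
proof -
  obtain D U Q2 where N: "srcword V \<Gamma> D" "walk V \<Gamma> D = Some Q2" "sinkword V Q2 U"
    "weq0 \<Gamma> w (D @ U)"
    using normalize[OF GQ _ w(2)] w(1) by fastforce
  have "walk V \<Gamma> (D @ U) = Some \<Gamma>" using weq_walk[OF N(4) symE GE] w(1) by simp
  then have wU: "walk V Q2 U = Some \<Gamma>" using N(2) by (simp add: walk_append)
  define R where "R = rev D"
  have sR: "sinkword V Q2 R" unfolding R_def using srcword_rev[OF N(1,2)] .
  have wR: "walk V Q2 R = Some \<Gamma>" unfolding R_def using walk_rev[OF N(2)] .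
  have Q2: "Q2 \<in> Quiv V E" using walk_Quiv[OF GQ N(2)] .
  define \<delta> where "\<delta> x = int (cnt U x) - int (cnt R x)" for x
  have dQ: "\<delta> a = \<delta> b" if ab: "(a, b) \<in> Q2" for a b
  proof -
    have 1: "(cnt U b = cnt U a \<and> (a, b) \<in> \<Gamma>) \<or> (cnt U b = Suc (cnt U a) \<and> (b, a) \<in> \<Gamma>)"
      using sink_count[OF Q2 N(3) wU ab] .
    have 2: "(cnt R b = cnt R a \<and> (a, b) \<in> \<Gamma>) \<or> (cnt R b = Suc (cnt R a) \<and> (b, a) \<in> \<Gamma>)"
      using sink_count[OF Q2 sR wR ab] .
    show ?thesis using 1 2 Quiv_notboth[OF GQ, of a b] unfolding \<delta>_def by auto
  qed
  have dE: "\<delta> a = \<delta> b" if ab: "(a, b) \<in> E" for a b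
    using Quiv_edge[OF Q2 ab] dQ[of a b] dQ[of b a] by metis
  obtain v0 where v0: "v0 \<in> V" using Vne by blast
  have dV: "\<delta> x = \<delta> v0" if x: "x \<in> V" for x
  proof -
    have "(v0, x) \<in> E\<^sup>*" using conn[OF v0 x] .
    then show ?thesis
      by (induction rule: rtrancl_induct) (auto dest: dE)
  qed
  have out: "cnt U x = 0" "cnt R x = 0" if "x \<notin> V" for x
    using sinkword_cnt_out[OF N(3) that] sinkword_cnt_out[OF sR that] by auto
  define k where "k = \<delta> v0"
  have noDl: "Dl \<notin> set U" "Dl \<notin> set R" using mset_no_Dl_sink N(3) sR by blast+
  have alD: "\<forall>g\<in>set D. allowed False g" using srcword_allowed[OF N(1)] .
  show ?thesis
  proof (cases "k \<ge> 0")
    case True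
    define n where "n = nat k"
    have sRc: "sinkword V Q2 (R @ coxp n)" using sR wR coxp(1) by (auto simp: sinkword_append)
    have "\<And>x. cnt U x = cnt (R @ coxp n) x"
    proof -
      fix x show "cnt U x = cnt (R @ coxp n) x"
      proof (cases "x \<in> V")
        case True
        then show ?thesis using dV[OF True] \<open>k \<ge> 0\<close> unfolding \<delta>_def k_def n_def
          by (simp add: cnt_append coxp(3))
      next
        case False
        then show ?thesis using out[OF False] by (simp add: cnt_append coxp(3))
      qed
    qed
    moreover have "Dl \<notin> set (R @ coxp n)" using noDl(2) mset_no_Dl_sink[OF coxp(1)] by auto
    ultimately have "mset U = mset (R @ coxp n)"
      using mset_eq_cnt[of U "R @ coxp n"] noDl(1) by blast
    then have 1: "weq0 Q2 U (R @ coxp n)" using up_unique[OF Q2 N(3) sRc] by simp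
    have 2: "weq0 \<Gamma> (D @ U) (D @ R @ coxp n)" using weq_prefix[OF N(2) alD 1] .
    have 3: "weq0 \<Gamma> (D @ rev D @ coxp n) (coxp n)"
      using weq_cancel[OF N(2) alD _ coxp_allowed] coxp(2) by simp
    have "weq0 \<Gamma> w (coxp n)"
      using weq0_trans[OF N(4) weq0_trans[OF 2 3[folded R_def]]] .
    then show ?thesis by blast
  next
    case False
    define n where "n = nat (- k)"
    have sUc: "sinkword V Q2 (U @ coxp n)" using N(3) wU coxp(1) by (auto simp: sinkword_append)
    have "\<And>x. cnt R x = cnt (U @ coxp n) x"
    proof -
      fix x show "cnt R x = cnt (U @ coxp n) x"
      proof (cases "x \<in> V")
        case True
        then show ?thesis using dV[OF True] False unfolding \<delta>_def k_def n_def
          by (simp add: cnt_append coxp(3))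
      next
        case False
        then show ?thesis using out[OF False] by (simp add: cnt_append coxp(3))
      qed
    qed
    moreover have "Dl \<notin> set (U @ coxp n)" using noDl(1) mset_no_Dl_sink[OF coxp(1)] by auto
    ultimately have "mset R = mset (U @ coxp n)"
      using mset_eq_cnt[of R "U @ coxp n"] noDl(2) by blast
    then have 1: "weq0 Q2 (U @ coxp n) R" using up_unique[OF Q2 sUc sR] by simp
    have 2: "weq0 \<Gamma> (w @ coxp n) (D @ U @ coxp n)"
      using weq_append[OF N(4) symE GE w(1) coxp_allowed] coxp(2) by simp
    have 3: "weq0 \<Gamma> (D @ U @ coxp n) (D @ R)" using weq_prefix[OF N(2) alD 1] .
    have 4: "weq0 \<Gamma> (D @ rev D @ []) []"
      using weq_cancel[OF N(2) alD, of "[]"] by simp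
    have "weq0 \<Gamma> (w @ coxp n) []"
      using weq0_trans[OF 2 weq0_trans[OF 3 4[simplified, folded R_def]]] .
    then show ?thesis by blast
  qed
qed

end


lemma walk_Dl: "walk V Q (Dl # y) = map_option converse (walk V Q y)"
  using walk_converse[of V Q y] by simp

lemma walk_refl_conv: "walk V (refl_at i (converse Q)) y = map_option converse (walk V (refl_at i Q) y)"
  by (simp add: converse_refl_at[symmetric] walk_converse)

lemma gen_pow_in: "x \<in> H \<Longrightarrow> x [^]\<^bsub>G\<^esub> (n::nat) \<in> generate G H"
  by (induction n) (auto intro: generate.intros)

lemma basic_rel_parity: "basic_rel wd E u v \<Longrightarrow> even (count (mset u) Dl) = even (count (mset v) Dl)"
  by (induction rule: basic_rel.induct) auto

lemma weq_parity:
  assumes "word_eq wd V E Q w w'" shows "even (count (mset w) Dl) = even (count (mset w') Dl)"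
proof -
  have "\<And>x y. rstep wd V E Q x y \<Longrightarrow> even (count (mset x) Dl) = even (count (mset y) Dl)"
  proof -
    fix x y assume "rstep wd V E Q x y"
    then obtain p u v s where "x = p @ u @ s" "y = p @ v @ s" "basic_rel wd E u v"
      unfolding rstep_def by blast
    then show "even (count (mset x) Dl) = even (count (mset y) Dl)"
      using basic_rel_parity by fastforce
  qed
  then show ?thesis
    using equivclp_inv[of "rstep wd V E Q" "\<lambda>x. even (count (mset x) Dl) = even (count (mset w) Dl)" w w']
      assms unfolding word_eq_def by blast
qed

context treeG
begin

lemma p_ex: "\<exists>p. sinkword V (converse \<Gamma>) p \<and> walk V (converse \<Gamma>) p = Some \<Gamma>"
proof -
  have gr: "is_graph V E" using tree unfolding is_finite_tree_def by blast
  obtain h :: "'a \<Rightarrow> int" where h: "\<forall>(a, b)\<in>\<Gamma>. h a = h b + 1"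
    using height_exists[OF finV gr nocyc GQ] by blast
  define mn where "mn = Min (h ` V)"
  have mn: "x \<in> V \<Longrightarrow> mn \<le> h x" for x unfolding mn_def using finV by simp
  define c where "c v = (if v \<in> V then nat (h v - mn) else 0)" for v
  have GV: "(a, b) \<in> \<Gamma> \<Longrightarrow> a \<in> V \<and> b \<in> V" for a b using GE EV by auto
  have cG: "c a = Suc (c b)" if "(a, b) \<in> \<Gamma>" for a b
    using h that GV[OF that] mn[of a] mn[of b] unfolding c_def by auto
  have cond: "\<forall>(a, b)\<in>converse \<Gamma>. c b = c a \<or> c b = Suc (c a)" using cG by auto
  have Gc: "converse \<Gamma> \<in> Quiv V E" using Quiv_converse[OF GQ] .
  obtain u where u: "sinkword V (converse \<Gamma>) u" "\<forall>x. cnt u x = c x"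
    using sw_exists[OF Gc _ cond] unfolding c_def by auto
  obtain Q' where Q': "walk V (converse \<Gamma>) u = Some Q'" using sinkword_walk[OF u(1)] by auto
  have "\<Gamma> \<subseteq> Q'"
  proof
    fix x assume x: "x \<in> \<Gamma>"
    obtain a b where ab: "x = (a, b)" by (cases x)
    have "(b, a) \<in> converse \<Gamma>" using x ab by simp
    then show "x \<in> Q'" using sink_count[OF Gc u(1) Q', of b a] cG[of a b] x ab u(2) by auto
  qed
  then have "Q' = \<Gamma>" using Quiv_eq[OF GQ walk_Quiv[OF Gc Q']] by simp
  then show ?thesis using u Q' by blast
qed

definition "pw = (SOME p. sinkword V (converse \<Gamma>) p \<and> walk V (converse \<Gamma>) p = Some \<Gamma>)"

lemma pw: "sinkword V (converse \<Gamma>) pw" "walk V (converse \<Gamma>) pw = Some \<Gamma>"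
  using someI_ex[OF p_ex] unfolding pw_def by blast+

lemma sig_loop_gen:
  assumes "walk V \<Gamma> w = Some \<Gamma>" "\<forall>g\<in>set w. allowed False g"
  shows "loop_class wd V E \<Gamma> w \<in> generate (Aut_grp wd V E \<Gamma>) {loop_class wd V E \<Gamma> cox}"
proof -
  interpret g: grpctx wd V E \<Gamma> using symE GE by unfold_locales
  interpret G: group g.G using g.group_G .
  have al: "\<forall>g\<in>set w. allowed wd g" using assms(2) by (auto simp: allowed_def)
  have wL: "w \<in> g.L" using assms(1) al unfolding loops_def by simp
  have coxL: "coxp n \<in> g.L" for n using coxp(2) coxp_allowed unfolding loops_def by simp
  have cox1: "cox \<in> g.L" using coxL[of 1] unfolding coxp_def by simp
  have pw: "g.cls (coxp n) = g.cls cox [^]\<^bsub>g.G\<^esub> n" for n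
    using g.cls_pow[OF cox1] unfolding coxp_def by simp
  have inc: "{g.cls cox} \<subseteq> carrier g.G" using g.cls_in[OF cox1] by simp
  from R0_loop[OF assms] show ?thesis
  proof
    assume "\<exists>k. weq0 \<Gamma> w (coxp k)"
    then obtain k where "weq0 \<Gamma> w (coxp k)" by blast
    then have "g.weq w (coxp k)" using weq_mono by blast
    then have "g.cls w = g.cls (coxp k)" using g.cls_eq_iff[OF wL coxL] by simp
    then show ?thesis using pw gen_pow_in[of "g.cls cox" "{g.cls cox}"] by simp
  next
    assume "\<exists>m. weq0 \<Gamma> (w @ coxp m) []"
    then obtain m where "weq0 \<Gamma> (w @ coxp m) []" by blast
    then have "g.weq (w @ coxp m) []" using weq_mono by blast
    then have "g.cls (w @ coxp m) = g.cls []"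
      using g.cls_eq_iff[OF g.loops_append[OF wL coxL] g.loops_Nil] by simp
    then have e: "g.cls w \<otimes>\<^bsub>g.G\<^esub> g.cls (coxp m) = \<one>\<^bsub>g.G\<^esub>"
      using g.cls_mult[OF wL coxL] g.one_G by simp
    have "g.cls w = inv\<^bsub>g.G\<^esub> (g.cls (coxp m))"
      using G.inv_equality[OF e g.cls_in[OF coxL] g.cls_in[OF wL]] by simp
    moreover have "g.cls (coxp m) \<in> generate g.G {g.cls cox}"
      using pw gen_pow_in[of "g.cls cox" "{g.cls cox}"] by simp
    ultimately show ?thesis using G.generate_m_inv_closed[OF inc] by simp
  qed
qed

theorem partA: "group (Aut_R0 V E \<Gamma>) \<and> cyclic_group (Aut_R0 V E \<Gamma>)"
proof -
  interpret g: grpctx False V E \<Gamma> using symE GE by unfold_locales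
  interpret G: group g.G using g.group_G .
  have cox1: "cox \<in> g.L" using cox(2) sinkword_allowed[OF cox(1)] unfolding loops_def by simp
  have inc: "{g.cls cox} \<subseteq> carrier g.G" using g.cls_in[OF cox1] by simp
  have "carrier g.G \<subseteq> generate g.G {g.cls cox}"
  proof
    fix x assume "x \<in> carrier g.G"
    then obtain w where w: "w \<in> g.L" "x = g.cls w" using g.carrier_G by auto
    then show "x \<in> generate g.G {g.cls cox}"
      using sig_loop_gen[of w False] unfolding loops_def by auto
  qed
  then have "generate g.G {g.cls cox} = carrier g.G" using G.generate_incl[OF inc] by blast
  then have "subgroup_generated g.G {g.cls cox} = g.G"
    unfolding subgroup_generated_def using inc by (simp add: Int_absorb1)
  then show ?thesis using g.group_G inc unfolding cyclic_group_def by blast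
qed

lemma Dl_commute:
  assumes "Dl \<notin> set t" "Q \<subseteq> E" "walk V Q (t @ Dl # r) \<noteq> None"
  shows "word_eq True V E Q (t @ Dl # r) (Dl # t @ r)"
  using assms
proof (induction t arbitrary: Q)
  case Nil
  then show ?case by (simp add: word_eq_def)
next
  case (Cons g t)
  from Cons.prems(1) obtain i where g: "g = Sig i" by (cases g) auto
  from Cons.prems(3) g have i: "i \<in> V" "is_source Q i \<or> is_sink Q i"
    "walk V (refl_at i Q) (t @ Dl # r) \<noteq> None" by (auto split: if_splits)
  have Q1E: "refl_at i Q \<subseteq> E" using gen_step_subE[OF symE Cons.prems(2), of V "Sig i"] i by simp
  have IH: "word_eq True V E (refl_at i Q) (t @ Dl # r) (Dl # t @ r)"
    using Cons.IH[OF _ Q1E i(3)] Cons.prems(1) by simp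
  have 1: "word_eq True V E Q ([Sig i] @ t @ Dl # r) ([Sig i] @ Dl # t @ r)"
    using weq_prefix[OF _ _ IH, of Q "[Sig i]"] i by (auto simp: allowed_def)
  have wy: "walk V (refl_at i Q) (t @ r) \<noteq> None"
    using weq_walk[OF IH symE Q1E] i(3) walk_Dl[of V "refl_at i Q" "t @ r"] by auto
  have "rstep True V E Q ([] @ [Dl, Sig i] @ (t @ r)) ([] @ [Sig i, Dl] @ (t @ r))"
    apply (rule rstepI)
    using basic_rel.R4[of True E i] wy i(1,2)
    by (auto simp: allowed_def walk_Dl walk_refl_conv walk_converse)
  then have 2: "word_eq True V E Q (Sig i # Dl # t @ r) (Dl # Sig i # t @ r)"
    unfolding word_eq_def by auto
  show ?case using equivclp_trans[OF 1[simplified, unfolded word_eq_def] 2[unfolded word_eq_def]] g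
    unfolding word_eq_def by simp
qed

lemma inv_word:
  assumes "srcword V \<Gamma> t" "walk V \<Gamma> t = Some (converse \<Gamma>)"
    "sinkword V (converse \<Gamma>) t" "walk V (converse \<Gamma>) t = Some \<Gamma>"
  shows "word_eq True V E \<Gamma> (Dl # t @ Dl # t) []"
proof -
  have GcE: "converse \<Gamma> \<subseteq> E" using Quiv_sub[OF Quiv_converse[OF GQ]] .
  have noD: "Dl \<notin> set t" using mset_no_Dl_src[OF assms(1)] .
  have al: "\<forall>g\<in>set t. allowed wd g" for wd using srcword_allowed[OF assms(1)] .
  have "walk V (converse \<Gamma>) (t @ Dl # t) \<noteq> None"
    using assms(2,4) by (simp add: walk_append walk_Dl)
  then have c: "word_eq True V E (converse \<Gamma>) (t @ Dl # t) (Dl # t @ t)"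
    using Dl_commute[OF noD GcE] by blast
  have 1: "word_eq True V E \<Gamma> ([Dl] @ t @ Dl # t) ([Dl] @ Dl # t @ t)"
    using weq_prefix[OF _ _ c, of \<Gamma> "[Dl]"] by (simp add: allowed_def)
  have wtt: "walk V \<Gamma> (t @ t) = Some \<Gamma>" using assms(2,4) by (simp add: walk_append)
  have "rstep True V E \<Gamma> ([] @ [Dl, Dl] @ (t @ t)) ([] @ [] @ (t @ t))"
    apply (rule rstepI)
    using basic_rel.R3[of True E] wtt al by (auto simp: allowed_def walk_Dl)
  then have 2: "word_eq True V E \<Gamma> (Dl # Dl # t @ t) (t @ t)" unfolding word_eq_def by auto
  have sr: "sinkword V (converse \<Gamma>) (rev t)" using srcword_rev[OF assms(1,2)] .
  have "weq0 (converse \<Gamma>) t (rev t)"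
    using up_unique[OF Quiv_converse[OF GQ] assms(3) sr] by simp
  then have "weq0 \<Gamma> (t @ t) (t @ rev t)" using weq_prefix[OF assms(2) al] by blast
  then have 3: "word_eq True V E \<Gamma> (t @ t) (t @ rev t)" using weq_mono by blast
  have 4: "word_eq True V E \<Gamma> (t @ rev t) []" using weq_cancel[OF assms(2) al, of "[]"] by simp
  show ?thesis
    using equivclp_trans[OF 1[simplified, unfolded word_eq_def] equivclp_trans[OF 2[unfolded word_eq_def]
          equivclp_trans[OF 3[unfolded word_eq_def] 4[unfolded word_eq_def]]]]
    unfolding word_eq_def by simp
qed

lemma split_Dl:
  assumes "Q \<subseteq> E" "walk V Q w \<noteq> None"
  shows "\<exists>e s. (e = [] \<or> e = [Dl]) \<and> Dl \<notin> set s \<and> word_eq True V E Q w (e @ s)"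
  using assms
proof (induction w arbitrary: Q)
  case Nil
  then show ?case by (intro exI[of _ "[]"]) (simp add: word_eq_def)
next
  case (Cons g w)
  from Cons.prems(2) obtain Q1 where g: "gen_step V Q g = Some Q1" "walk V Q1 w \<noteq> None"
    by (auto split: option.splits)
  have Q1E: "Q1 \<subseteq> E" using gen_step_subE[OF symE Cons.prems(1) g(1)] .
  obtain e s where es: "e = [] \<or> e = [Dl]" "Dl \<notin> set s" "word_eq True V E Q1 w (e @ s)"
    using Cons.IH[OF Q1E g(2)] by blast
  have wes: "walk V Q1 (e @ s) \<noteq> None" using weq_walk[OF es(3) symE Q1E] g(2) by simp
  have 1: "word_eq True V E Q ([g] @ w) ([g] @ e @ s)"
    using weq_prefix[OF _ _ es(3), of Q "[g]"] g(1) by (simp add: allowed_def)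
  show ?case
  proof (cases g)
    case (Sig i)
    with g(1) have i: "i \<in> V" "is_source Q i \<or> is_sink Q i" "Q1 = refl_at i Q"
      by (auto split: if_splits)
    show ?thesis
    proof (cases "e = []")
      case True
      then show ?thesis using 1 es Sig by (intro exI[of _ "[]"] exI[of _ "Sig i # s"]) simp
    next
      case False
      then have eD: "e = [Dl]" using es(1) by blast
      have ws: "walk V Q1 s \<noteq> None" using wes eD by (simp add: walk_Dl walk_converse)
      have "rstep True V E Q ([] @ [Dl, Sig i] @ s) ([] @ [Sig i, Dl] @ s)"
        apply (rule rstepI)
        using basic_rel.R4[of True E i] ws i
        by (auto simp: allowed_def walk_Dl walk_refl_conv walk_converse)
      then have "word_eq True V E Q (Sig i # Dl # s) (Dl # Sig i # s)"
        unfolding word_eq_def by auto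
      then show ?thesis using equivclp_trans[OF 1[unfolded word_eq_def]] eD Sig es(2)
        by (intro exI[of _ "[Dl]"] exI[of _ "Sig i # s"]) (simp add: word_eq_def)
    qed
  next
    case Dl
    then have Q1: "Q1 = converse Q" using g(1) by simp
    show ?thesis
    proof (cases "e = []")
      case True
      then show ?thesis using 1 es Dl by (intro exI[of _ "[Dl]"] exI[of _ s]) simp
    next
      case False
      then have eD: "e = [Dl]" using es(1) by blast
      have ws: "walk V Q s \<noteq> None" using wes eD Q1 by simp
      have "rstep True V E Q ([] @ [Dl, Dl] @ s) ([] @ [] @ s)"
        apply (rule rstepI)
        using basic_rel.R3[of True E] ws by (auto simp: allowed_def walk_Dl)
      then have "word_eq True V E Q (Dl # Dl # s) s"
        unfolding word_eq_def by auto
      then show ?thesis using equivclp_trans[OF 1[unfolded word_eq_def]] eD Dl es(2)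
        by (intro exI[of _ "[]"] exI[of _ s]) (simp add: word_eq_def)
    qed
  qed
qed

theorem partB: "group (Aut_R V E \<Gamma>) \<and>
         (\<exists>a b. is_involution (Aut_R V E \<Gamma>) a \<and> is_involution (Aut_R V E \<Gamma>) b \<and>
                subgroup_generated (Aut_R V E \<Gamma>) {a, b} = Aut_R V E \<Gamma>)"
proof -
  interpret g: grpctx True V E \<Gamma> using symE GE by unfold_locales
  interpret G: group g.G using g.group_G .
  have Gc: "converse \<Gamma> \<in> Quiv V E" using Quiv_converse[OF GQ] .
  have al: "\<forall>g\<in>set w. allowed True g" for w by (simp add: allowed_def)
  have alD: "allowed True g" for g by (simp add: allowed_def)
  have pG: "walk V \<Gamma> pw = Some (converse \<Gamma>)" using walk_converse[of V "converse \<Gamma>" pw] pw(2) by simp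
  have psrc: "srcword V \<Gamma> pw" using pw(1) sinkword_converse[of V \<Gamma> pw] by simp
  have coxc: "walk V (converse \<Gamma>) cox = Some (converse \<Gamma>)" using walk_converse[of V \<Gamma> cox] cox(2) by simp
  have coxsrc: "srcword V (converse \<Gamma>) cox" using cox(1) srcword_converse[of V \<Gamma> cox] by simp
  define t where "t = pw @ cox"
  have t1: "srcword V \<Gamma> t" using psrc pG coxsrc unfolding t_def by (auto simp: srcword_append)
  have t2: "walk V \<Gamma> t = Some (converse \<Gamma>)" using pG coxc unfolding t_def by (simp add: walk_append)
  have t3: "sinkword V (converse \<Gamma>) t" using pw cox(1) unfolding t_def by (auto simp: sinkword_append)
  have t4: "walk V (converse \<Gamma>) t = Some \<Gamma>" using pw(2) cox(2) unfolding t_def by (simp add: walk_append)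
  have aL: "Dl # pw \<in> g.L" using pw(2) al unfolding loops_def by (simp add: allowed_def)
  have bL: "Dl # t \<in> g.L" using t4 al unfolding loops_def by (simp add: allowed_def)
  have coxL: "cox \<in> g.L" using cox(2) al unfolding loops_def by simp
  define a where "a = g.cls (Dl # pw)"
  define b where "b = g.cls (Dl # t)"
  define x where "x = g.cls cox"
  have aC: "a \<in> carrier g.G" unfolding a_def using g.cls_in[OF aL] .
  have bC: "b \<in> carrier g.G" unfolding b_def using g.cls_in[OF bL] .
  have xC: "x \<in> carrier g.G" unfolding x_def using g.cls_in[OF coxL] .
  have abx: "a \<otimes>\<^bsub>g.G\<^esub> x = b" unfolding a_def b_def x_def t_def using g.cls_mult[OF aL coxL] by simp
  have invol: "is_involution g.G (g.cls (Dl # u))"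
    if "srcword V \<Gamma> u" "walk V \<Gamma> u = Some (converse \<Gamma>)"
    "sinkword V (converse \<Gamma>) u" "walk V (converse \<Gamma>) u = Some \<Gamma>" for u
  proof -
    have uL: "Dl # u \<in> g.L" using that(4) al unfolding loops_def by (simp add: allowed_def)
    have "g.weq (Dl # u @ Dl # u) []" using inv_word[OF that] .
    then have sq: "g.cls (Dl # u) \<otimes>\<^bsub>g.G\<^esub> g.cls (Dl # u) = \<one>\<^bsub>g.G\<^esub>"
      using g.cls_mult[OF uL uL] g.cls_eq_iff[OF g.loops_append[OF uL uL] g.loops_Nil] g.one_G by simp
    have noD: "Dl \<notin> set u" using mset_no_Dl_src[OF that(1)] .
    have "g.cls (Dl # u) \<noteq> g.cls []"
    proof
      assume "g.cls (Dl # u) = g.cls []"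
      then have "g.weq (Dl # u) []" using g.cls_eq_iff[OF uL g.loops_Nil] by simp
      then have "even (count (mset (Dl # u)) Dl) = even (count (mset ([]::'a gen list)) Dl)"
        using weq_parity by blast
      moreover have "count (mset u) Dl = 0" using noD by (metis count_eq_zero_iff set_mset_mset)
      ultimately show False by simp
    qed
    then show ?thesis unfolding is_involution_def using g.cls_in[OF uL] sq g.one_G by simp
  qed
  have ia: "is_involution g.G a" unfolding a_def using invol[OF psrc pG pw] .
  have ib: "is_involution g.G b" unfolding b_def using invol[OF t1 t2 t3 t4] .
  have abC: "{a, b} \<subseteq> carrier g.G" using aC bC by simp
  have sgab: "subgroup (generate g.G {a, b}) g.G" using G.generate_is_subgroup[OF abC] .
  have "x = inv\<^bsub>g.G\<^esub> a \<otimes>\<^bsub>g.G\<^esub> b" using abx aC xC bC by (metis G.inv_solve_left)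
  then have xin: "x \<in> generate g.G {a, b}"
    by (simp add: generate.eng generate.incl generate.inv)
  then have genx: "generate g.G {x} \<subseteq> generate g.G {a, b}"
    using G.generate_subgroup_incl[OF _ sgab] by simp
  have "carrier g.G \<subseteq> generate g.G {a, b}"
  proof
    fix y assume "y \<in> carrier g.G"
    then obtain w where w: "w \<in> g.L" "y = g.cls w" using g.carrier_G by auto
    have wG: "walk V \<Gamma> w = Some \<Gamma>" using w(1) unfolding loops_def by simp
    obtain e s where es: "e = [] \<or> e = [Dl]" "Dl \<notin> set s" "g.weq w (e @ s)"
      using split_Dl[OF GE, of w] wG by auto
    have wes: "walk V \<Gamma> (e @ s) = Some \<Gamma>" using weq_walk[OF es(3) symE GE] wG by simp
    have esL: "e @ s \<in> g.L" using wes unfolding loops_def by (simp add: allowed_def)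
    have yes: "y = g.cls (e @ s)" using w g.cls_eq_iff[OF w(1) esL] es(3) by simp
    have sal: "\<forall>g\<in>set s. allowed False g" using es(2) by (auto simp: allowed_def)
    show "y \<in> generate g.G {a, b}"
    proof (cases "e = []")
      case True
      then have "g.cls s \<in> generate g.G {x}"
        using sig_loop_gen[of s True] wes sal unfolding x_def by simp
      then show ?thesis using yes True genx by auto
    next
      case False
      then have eD: "e = [Dl]" using es(1) by blast
      have ws: "walk V (converse \<Gamma>) s = Some \<Gamma>" using wes eD by (simp add: walk_Dl)
      have rp: "walk V \<Gamma> (rev pw) = Some (converse \<Gamma>)" using walk_rev[OF pw(2)] .
      define u where "u = rev pw @ s"
      have uG: "walk V \<Gamma> u = Some \<Gamma>" using rp ws unfolding u_def by (simp add: walk_append)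
      have ual: "\<forall>g\<in>set u. allowed False g"
        using sal sinkword_allowed[OF pw(1)] unfolding u_def by auto
      have uin: "g.cls u \<in> generate g.G {x}" using sig_loop_gen[OF uG ual] unfolding x_def .
      have uL: "u \<in> g.L" using uG al unfolding loops_def by simp
      have c: "word_eq True V E (converse \<Gamma>) (pw @ rev pw @ s) s"
      proof -
        have alS: "\<forall>g\<in>set s. allowed True g" by (simp add: allowed_def)
        have "walk V (converse \<Gamma>) s \<noteq> None" using ws by simp
        then show ?thesis using weq_cancel[OF pw(2) al _ alS] by blast
      qed
      have "g.weq ([Dl] @ pw @ rev pw @ s) ([Dl] @ s)"
        using weq_prefix[OF _ _ c, of \<Gamma> "[Dl]"] by (simp add: allowed_def)
      then have "g.cls (Dl # pw @ u) = g.cls (Dl # s)"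
        using g.cls_eq_iff[OF g.loops_append[OF aL uL] esL] eD unfolding u_def by simp
      then have "y = a \<otimes>\<^bsub>g.G\<^esub> g.cls u"
        using yes eD g.cls_mult[OF aL uL] unfolding a_def by simp
      moreover have "a \<in> generate g.G {a, b}" by (simp add: generate.incl)
      ultimately show ?thesis using uin genx by (auto intro: generate.eng)
    qed
  qed
  then have "generate g.G {a, b} = carrier g.G" using G.generate_incl[OF abC] by blast
  then have "subgroup_generated g.G {a, b} = g.G"
    unfolding subgroup_generated_def using abC by (simp add: Int_absorb1)
  then show ?thesis using g.group_G ia ib by blast
qed

end


theorem mainTheorem14:
  fixes V :: "'v set" and E :: "('v \<times> 'v) set" and \<Gamma> :: "('v \<times> 'v) set"
  assumes "is_finite_tree V E"
    and "\<Gamma> \<in> Quiv V E"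
  shows "(group (Aut_R0 V E \<Gamma>) \<and> cyclic_group (Aut_R0 V E \<Gamma>)) \<and>
         (group (Aut_R V E \<Gamma>) \<and>
         (\<exists>a b. is_involution (Aut_R V E \<Gamma>) a \<and> is_involution (Aut_R V E \<Gamma>) b \<and>
                subgroup_generated (Aut_R V E \<Gamma>) {a, b} = Aut_R V E \<Gamma>))"
proof -
  interpret treeG V E \<Gamma>
    by unfold_locales (rule assms)+
  show ?thesis using partA partB by blast
qed

end
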